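(* Let $p<0$, $\alpha>0$, $q<\frac{\alpha}{n+\alpha}$, and let $\mu$ be a non-zero finite even Borel measure on $S^{n-1}$ that vanishes on all great subspheres. Define $\varphi(f)=-\frac1p\int_{S^{n-1}}f^p\,d\mu$. Then for every $c\in(0,1)$ there exists $K\in\mathcal{K}_e^n$ with $G_{\alpha,q}(K)=c$ such that \[\varphi(h_K)=\sup\{\varphi(f): f\in C_e^+(S^{n-1}),\ G_{\alpha,q}([f])=c\}.\]
   Context: $C_e^+(S^{n-1})$: even positive continuous functions on $S^{n-1}$; $[f]=\{x: x\cdot v\le f(v)\ \forall v\in S^{n-1}\}$; $h_K$ support function. $\mathcal{K}_e^n$: origin-symmetric convex bodies containing the origin in their interior. $g_{\alpha,q}(x)=\frac{1}{Z(\alpha,q)}[1-\frac{q}{\alpha}|x|^\alpha]_+^{\frac1q-\frac n\alpha-1}$ ($q\ne0$), $\frac{1}{Z(\alpha,q)}e^{-|x|^\alpha/\alpha}$ ($q=0$), normalized to mass 1; $G_{\alpha,q}(K)=\int_Kg_{\alpha,q}$. $\mu$ vanishes on all great subspheres: $\mu(S^{n-1}\cap H)=0$ for every proper linear subspace $H$. *)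

theory Defs
  imports "HOL-Analysis.Analysis"
begin

text \<open>Unit sphere S^{n-1} in the Euclidean space 'a, n = DIM('a).\<close>
abbreviation Sph :: "'a::euclidean_space set" where
  "Sph \<equiv> sphere 0 1"

text \<open>Even positive continuous functions on the sphere (values off the sphere are irrelevant).\<close>
definition Ce_plus :: "('a::euclidean_space \<Rightarrow> real) set" where
  "Ce_plus = {f. continuous_on Sph f \<and> (\<forall>v\<in>Sph. f v > 0) \<and> (\<forall>v\<in>Sph. f (- v) = f v)}"

text \<open>Wulff shape [f].\<close>
definition wulff :: "('a::euclidean_space \<Rightarrow> real) \<Rightarrow> 'a set" where
  "wulff f = {x. \<forall>v\<in>Sph. x \<bullet> v \<le> f v}"

text \<open>Support function.\<close>
definition supp_fun :: "'a::euclidean_space set \<Rightarrow> 'a \<Rightarrow> real" where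
  "supp_fun K v = (SUP x\<in>K. x \<bullet> v)"

text \<open>Origin-symmetric convex bodies with the origin in the interior.\<close>
definition Ke :: "'a::euclidean_space set set" where
  "Ke = {K. compact K \<and> convex K \<and> 0 \<in> interior K \<and> uminus ` K = K}"

text \<open>Unnormalized density of g_{alpha,q}.\<close>
definition g_raw :: "real \<Rightarrow> real \<Rightarrow> 'a::euclidean_space \<Rightarrow> real" where
  "g_raw \<alpha> q x =
     (if q = 0 then exp (- (norm x powr \<alpha>) / \<alpha>)
      else (max 0 (1 - q / \<alpha> * norm x powr \<alpha>))
             powr (1 / q - real DIM('a) / \<alpha> - 1))"

definition Zc :: "real \<Rightarrow> real \<Rightarrow> 'a::euclidean_space itself \<Rightarrow> real" where
  "Zc \<alpha> q _ = (LINT x|(lborel :: 'a measure). g_raw \<alpha> q x)"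

definition g_dens :: "real \<Rightarrow> real \<Rightarrow> 'a::euclidean_space \<Rightarrow> real" where
  "g_dens \<alpha> q x = g_raw \<alpha> q x / Zc \<alpha> q TYPE('a)"

definition Gmeas :: "real \<Rightarrow> real \<Rightarrow> 'a::euclidean_space set \<Rightarrow> real" where
  "Gmeas \<alpha> q K = (LINT x:K|lborel. g_dens \<alpha> q x)"

text \<open>phi(f) = -(1/p) \<integral> f^p d mu.\<close>
definition phi :: "real \<Rightarrow> 'a::euclidean_space measure \<Rightarrow> ('a \<Rightarrow> real) \<Rightarrow> real" where
  "phi p \<mu> f = - (1 / p) * (\<integral>v. f v powr p \<partial>\<mu>)"

end

theory Submission
  imports Defs "HOL-Library.Diagonal_Subsequence"
begin

lemma wulff_closed: "closed (wulff f)"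
proof -
  have "wulff f = (\<Inter>v\<in>Sph. {x. inner v x \<le> f v})"
    by (auto simp: wulff_def inner_commute)
  then show ?thesis by (auto intro!: closed_INT closed_halfspace_le)
qed

lemma wulff_convex: "convex (wulff f)"
proof -
  have "wulff f = (\<Inter>v\<in>Sph. {x. inner v x \<le> f v})"
    by (auto simp: wulff_def inner_commute)
  then show ?thesis by (auto intro!: convex_INT convex_halfspace_le)
qed

lemma cball_sub_wulff:
  assumes "\<forall>v\<in>Sph. r \<le> f v"
  shows "cball 0 r \<subseteq> wulff f"
proof
  fix x :: 'a assume "x \<in> cball 0 r"
  then have "norm x \<le> r" by auto
  show "x \<in> wulff f" unfolding wulff_def
  proof (intro CollectI ballI)
    fix v :: 'a assume v: "v \<in> Sph"
    have "x \<bullet> v \<le> norm x * norm v" by (rule norm_cauchy_schwarz)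
    also have "\<dots> = norm x" using v by simp
    finally show "x \<bullet> v \<le> f v" using assms v \<open>norm x \<le> r\<close> by force
  qed
qed

lemma wulff_sub_cball:
  assumes "\<forall>v\<in>Sph. f v \<le> R" "0 \<le> R"
  shows "wulff f \<subseteq> cball 0 R"
proof
  fix x :: 'a assume x: "x \<in> wulff f"
  show "x \<in> cball 0 R"
  proof (cases "x = 0")
    case True then show ?thesis using assms by simp
  next
    case False
    define v where "v = x /\<^sub>R norm x"
    have v: "v \<in> Sph" using False by (simp add: v_def)
    have "x \<bullet> v = norm x" using False
      by (simp add: v_def inner_commute dot_square_norm power2_eq_square)
    have "x \<bullet> v \<le> f v" using x v unfolding wulff_def by blast
    then have "norm x \<le> f v" using \<open>x \<bullet> v = norm x\<close> by simp
    then show ?thesis using assms v by force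
  qed
qed

lemma wulff_sym:
  assumes "\<forall>v\<in>Sph. f (- v) = f v"
  shows "uminus ` wulff f = wulff f"
proof -
  have *: "- x \<in> wulff f" if "x \<in> wulff f" for x
    unfolding wulff_def
  proof (intro CollectI ballI)
    fix v :: 'a assume v: "v \<in> Sph"
    then have "- v \<in> Sph" by simp
    then have "x \<bullet> (- v) \<le> f (- v)" using that unfolding wulff_def by blast
    then show "(- x) \<bullet> v \<le> f v" using assms v by simp
  qed
  show ?thesis
  proof
    show "uminus ` wulff f \<subseteq> wulff f" using * by auto
    show "wulff f \<subseteq> uminus ` wulff f"
    proof
      fix x assume "x \<in> wulff f"
      then have "- x \<in> wulff f" by (rule *)
      moreover have "x = - (- x)" by simp
      ultimately show "x \<in> uminus ` wulff f" by (rule rev_image_eqI)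
    qed
  qed
qed

lemma wulff_Ke:
  assumes "\<forall>v\<in>Sph. r \<le> f v" "\<forall>v\<in>Sph. f v \<le> R" "0 < r" "\<forall>v\<in>Sph. f (- v) = f v"
  shows "wulff f \<in> Ke"
proof -
  obtain v :: 'a where "norm v = 1" using vector_choose_size[of 1] by auto
  then have "v \<in> Sph" by simp
  have r1: "r \<le> f v" using assms(1) \<open>v \<in> Sph\<close> by blast
  have r2: "f v \<le> R" using assms(2) \<open>v \<in> Sph\<close> by blast
  have R: "0 \<le> R" using r1 r2 assms(3) by simp
  have "bounded (wulff f)"
    using wulff_sub_cball[OF assms(2) R] bounded_cball bounded_subset by blast
  then have "compact (wulff f)" using wulff_closed compact_eq_bounded_closed by blast
  moreover have "0 \<in> interior (wulff f)"
  proof -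
    have "ball 0 r \<subseteq> wulff f" using cball_sub_wulff[OF assms(1)] ball_subset_cball by blast
    then have "ball 0 r \<subseteq> interior (wulff f)" by (simp add: interior_maximal)
    then show ?thesis using assms(3) by auto
  qed
  ultimately show ?thesis using wulff_convex wulff_sym[OF assms(4)] by (auto simp: Ke_def)
qed

lemma supp_upper:
  assumes "bounded K" "x \<in> K"
  shows "x \<bullet> v \<le> supp_fun K v"
proof -
  obtain M where M: "\<forall>y\<in>K. norm y \<le> M" using assms(1) bounded_iff by blast
  have "bdd_above ((\<lambda>y. y \<bullet> v) ` K)"
  proof (rule bdd_aboveI2)
    fix y assume "y \<in> K"
    have "y \<bullet> v \<le> norm y * norm v" by (rule norm_cauchy_schwarz)
    also have "\<dots> \<le> M * norm v" using M \<open>y\<in>K\<close> by (simp add: mult_right_mono)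
    finally show "y \<bullet> v \<le> M * norm v" .
  qed
  then show ?thesis unfolding supp_fun_def using assms(2) by (rule cSUP_upper2) auto
qed

lemma supp_least:
  assumes "K \<noteq> {}" "\<And>x. x \<in> K \<Longrightarrow> x \<bullet> v \<le> M"
  shows "supp_fun K v \<le> M"
  unfolding supp_fun_def using assms by (rule cSUP_least)

lemma supp_lipschitz:
  assumes "K \<subseteq> cball 0 R" "K \<noteq> {}"
  shows "\<bar>supp_fun K x - supp_fun K y\<bar> \<le> R * norm (x - y)"
proof -
  have bK: "bounded K" using assms(1) bounded_cball bounded_subset by blast
  have *: "supp_fun K a \<le> supp_fun K b + R * norm (a - b)" for a b
  proof (rule supp_least[OF assms(2)])
    fix z assume z: "z \<in> K"
    have "z \<bullet> a = z \<bullet> b + z \<bullet> (a - b)" by (simp add: inner_diff_right)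
    also have "z \<bullet> (a - b) \<le> norm z * norm (a - b)" by (rule norm_cauchy_schwarz)
    also have "norm z * norm (a - b) \<le> R * norm (a - b)"
      using assms(1) z by (auto intro!: mult_right_mono)
    also have "z \<bullet> b \<le> supp_fun K b" by (rule supp_upper[OF bK z])
    finally show "z \<bullet> a \<le> supp_fun K b + R * norm (a - b)" by simp
  qed
  show ?thesis using *[of x y] *[of y x] by (simp add: norm_minus_commute abs_le_iff)
qed

lemma supp_continuous:
  assumes "K \<subseteq> cball 0 R" "K \<noteq> {}"
  shows "continuous_on S (supp_fun K)"
proof -
  have R: "0 \<le> R" using assms by auto
  have "R-lipschitz_on S (supp_fun K)"
    using supp_lipschitz[OF assms] R by (intro lipschitz_onI) (auto simp: dist_norm dist_real_def)
  then show ?thesis by (rule lipschitz_on_continuous_on)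
qed

lemma supp_ge:
  assumes "cball 0 r \<subseteq> K" "bounded K" "v \<in> Sph" "0 \<le> r"
  shows "r \<le> supp_fun K v"
proof -
  have "r *\<^sub>R v \<in> K" using assms by auto
  then have "(r *\<^sub>R v) \<bullet> v \<le> supp_fun K v" using supp_upper[OF assms(2)] by blast
  then show ?thesis using assms(3) by (simp add: dot_square_norm)
qed

lemma supp_even:
  assumes "uminus ` K = K"
  shows "supp_fun K (- v) = supp_fun K v"
proof -
  have "(\<lambda>x. x \<bullet> (- v)) ` K = (\<lambda>x. x \<bullet> v) ` (uminus ` K)" by (auto simp: image_image)
  then have "(\<lambda>x. x \<bullet> (- v)) ` K = (\<lambda>x. x \<bullet> v) ` K" by (simp only: assms)
  then show ?thesis unfolding supp_fun_def by simp
qed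

lemma wulff_supp:
  assumes "compact K" "convex K" "K \<noteq> {}"
  shows "wulff (supp_fun K) = K"
proof
  have bK: "bounded K" using assms compact_imp_bounded by blast
  show "K \<subseteq> wulff (supp_fun K)" using supp_upper[OF bK] by (auto simp: wulff_def)
  show "wulff (supp_fun K) \<subseteq> K"
  proof
    fix z assume z: "z \<in> wulff (supp_fun K)"
    show "z \<in> K"
    proof (rule ccontr)
      assume "z \<notin> K"
      then obtain a b where ab: "inner a z < b" "\<forall>x\<in>K. inner a x > b"
        using separating_hyperplane_closed_point[OF assms(2) compact_imp_closed[OF assms(1)]] by blast
      have "a \<noteq> 0" using ab assms(3) by auto
      define v where "v = - (a /\<^sub>R norm a)"
      have v: "v \<in> Sph" using \<open>a \<noteq> 0\<close> by (simp add: v_def)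
      have "supp_fun K v \<le> - b / norm a"
      proof (rule supp_least[OF assms(3)])
        fix x assume "x \<in> K"
        then have "inner a x > b" using ab by auto
        then show "x \<bullet> v \<le> - b / norm a" using \<open>a \<noteq> 0\<close>
          by (simp add: v_def inner_commute field_simps)
      qed
      moreover have "- b / norm a < z \<bullet> v" using ab(1) \<open>a \<noteq> 0\<close>
          by (simp add: v_def inner_commute field_simps)
      ultimately have "supp_fun K v < z \<bullet> v" by simp
      moreover have "z \<bullet> v \<le> supp_fun K v" using z v unfolding wulff_def by blast
      ultimately show False by simp
    qed
  qed
qed

lemma lip_subseq:
  fixes F :: "nat \<Rightarrow> 'a::euclidean_space \<Rightarrow> real"
  assumes lip: "\<And>i x y. \<bar>F i x - F i y\<bar> \<le> L * norm (x - y)"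
    and bnd: "\<And>i x. \<bar>F i x\<bar> \<le> M x"
  shows "\<exists>\<sigma>. strict_mono \<sigma> \<and> (\<forall>x. convergent (\<lambda>i. F (\<sigma> i) x))"
proof -
  obtain D :: "'a set" where D: "countable D" "\<And>X. open X \<Longrightarrow> X \<noteq> {} \<Longrightarrow> \<exists>d\<in>D. d \<in> X"
    using countable_dense_setE by blast
  have "D \<noteq> {}" using D(2)[of UNIV] by auto
  define r where "r = from_nat_into D"
  have rD: "range r = D" unfolding r_def using D(1) \<open>D \<noteq> {}\<close> by (simp add: range_from_nat_into)
  let ?P = "\<lambda>n. \<lambda>s. convergent (\<lambda>k. F (s k) (r n))"
  interpret nat: subseqs ?P
  proof (unfold convergent_def, unfold subseqs_def, auto)
    fix n :: nat and s :: "nat \<Rightarrow> nat" assume s: "strict_mono s"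
    have "bounded {-M (r n)..M (r n)}"
      using bounded_closed_interval by auto
    moreover have "\<And>k. F (s k) (r n) \<in> {-M (r n)..M (r n)}"
      using bnd by (simp add: abs_le_iff minus_le_iff)
    ultimately have "\<exists>l s'. strict_mono s' \<and> ((\<lambda>k. F (s k) (r n)) \<circ> s') \<longlonglongrightarrow> l"
      using compact_Icc compact_imp_seq_compact seq_compactE by metis
    thus "\<exists>s'. strict_mono (s'::nat\<Rightarrow>nat) \<and> (\<exists>l. (\<lambda>k. F (s (s' k)) (r n)) \<longlonglongrightarrow> l)"
      by (auto simp: comp_def)
  qed
  define d where "d = nat.diagseq"
  have subseq: "strict_mono d"
    unfolding d_def using nat.subseq_diagseq by auto
  have rat_cnv: "?P n d" for n
  proof -
    have Pn_seqseq: "?P n (nat.seqseq (Suc n))"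
      by (rule nat.seqseq_holds)
    have 1: "(\<lambda>k. F ((nat.seqseq (Suc n) \<circ> (\<lambda>k. nat.fold_reduce (Suc n) k
      (Suc n + k))) k) (r n)) = (\<lambda>k. F (nat.seqseq (Suc n) k) (r n)) \<circ>
      (\<lambda>k. nat.fold_reduce (Suc n) k (Suc n + k))"
      by auto
    have 2: "?P n (d \<circ> ((+) (Suc n)))"
      unfolding d_def nat.diagseq_seqseq 1
      by (intro convergent_subseq_convergent Pn_seqseq nat.subseq_diagonal_rest)
    then obtain L where 3: "(\<lambda>na. F (d (na + Suc n)) (r n)) \<longlonglongrightarrow> L"
      by (auto simp: add.commute dest: convergentD)
    then have "(\<lambda>k. F (d k) (r n)) \<longlonglongrightarrow> L"
      by (rule LIMSEQ_offset)
    then show ?thesis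
      by (auto simp: convergent_def)
  qed
  have "convergent (\<lambda>i. F (d i) x)" for x
  proof (rule real_Cauchy_convergent, rule metric_CauchyI)
    fix e :: real assume e: "0 < e"
    define e' where "e' = e / (3 * (\<bar>L\<bar> + 1))"
    have e': "0 < e'" using e by (simp add: e'_def)
    obtain y where y: "y \<in> D" "y \<in> ball x e'" using D(2)[of "ball x e'"] e' by auto
    obtain n where yn: "y = r n" using y(1) rD by auto
    have cau: "Cauchy (\<lambda>k. F (d k) (r n))" using rat_cnv[of n] by (simp add: convergent_Cauchy)
    then obtain N where N: "\<And>i j. i \<ge> N \<Longrightarrow> j \<ge> N \<Longrightarrow> dist (F (d i) (r n)) (F (d j) (r n)) < e/3"
      using metric_CauchyD[OF cau, of "e/3"] e by auto
    have xy: "norm (x - y) < e'" using y(2) by (simp add: dist_norm)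
    have LL: "L * norm (x - y) \<le> \<bar>L\<bar> * e'"
    proof -
      have "L * norm (x - y) \<le> \<bar>L\<bar> * norm (x - y)" by (simp add: mult_right_mono)
      also have "\<dots> \<le> \<bar>L\<bar> * e'" using xy by (simp add: mult_left_mono)
      finally show ?thesis .
    qed
    have Le: "\<bar>L\<bar> * e' \<le> e / 3"
      using e by (simp add: e'_def field_simps)
    show "\<exists>N. \<forall>i\<ge>N. \<forall>j\<ge>N. dist (F (d i) x) (F (d j) x) < e"
    proof (intro exI allI impI)
      fix i j assume ij: "N \<le> i" "N \<le> j"
      have a: "\<bar>F (d i) x - F (d i) y\<bar> \<le> \<bar>L\<bar> * e'"
        using lip[of "d i" x y] LL by linarith
      have b: "\<bar>F (d j) x - F (d j) y\<bar> \<le> \<bar>L\<bar> * e'"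
        using lip[of "d j" x y] LL by linarith
      have c: "\<bar>F (d i) y - F (d j) y\<bar> < e/3" using N[OF ij] yn by (simp add: dist_real_def)
      show "dist (F (d i) x) (F (d j) x) < e"
        using a b c Le unfolding dist_real_def by linarith
    qed
  qed
  then show ?thesis using subseq by blast
qed

definition GG :: "('a::euclidean_space \<Rightarrow> real) \<Rightarrow> 'a set \<Rightarrow> real" where
  "GG g A = (\<integral>x. indicator A x * g x \<partial>lborel)"

lemma Gmeas_GG: "Gmeas \<alpha> q A = GG (g_dens \<alpha> q) A"
  by (simp add: Gmeas_def GG_def set_lebesgue_integral_def)

lemma hyperplane_null:
  fixes l :: "'a::euclidean_space"
  assumes "l \<noteq> 0"
  shows "{x. x \<bullet> l = 0} \<in> null_sets lborel"
proof -
  have eq: "{x. x \<bullet> l = 0} = {x. l \<bullet> x = 0}" by (auto simp: inner_commute)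
  have "negligible {x. l \<bullet> x = 0}" using negligible_hyperplane[of l 0] assms by simp
  then have "{x. l \<bullet> x = 0} \<in> null_sets lebesgue" by (simp add: negligible_iff_null_sets)
  moreover have "{x. l \<bullet> x = 0} \<in> sets lborel"
    by (simp add: borel_closed closed_hyperplane)
  ultimately show ?thesis using eq null_sets_completion_iff by metis
qed

lemma lborel_integral_scale:
  fixes f :: "'a::euclidean_space \<Rightarrow> real"
  assumes t: "t \<noteq> 0" and f[measurable]: "f \<in> borel_measurable borel"
  shows "(\<integral>x. f x \<partial>lborel) = \<bar>t\<bar> ^ DIM('a) * (\<integral>x. f (t *\<^sub>R x) \<partial>lborel)"
proof -
  have "(\<integral>x. f x \<partial>lborel) = (\<integral>x. f x \<partial>(density (distr lborel borel (\<lambda>x. 0 + t *\<^sub>R x)) (\<lambda>_. \<bar>t\<bar>^DIM('a))))"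
    by (rule arg_cong[where f="\<lambda>M. integral\<^sup>L M f"], rule lborel_affine[OF t])
  also have "\<dots> = (\<integral>x. \<bar>t\<bar>^DIM('a) * f x \<partial>(distr lborel borel (\<lambda>x. 0 + t *\<^sub>R x)))"
    by (subst integral_density) auto
  also have "\<dots> = (\<integral>x. \<bar>t\<bar>^DIM('a) * f (t *\<^sub>R x) \<partial>lborel)"
    by (subst integral_distr) auto
  also have "\<dots> = \<bar>t\<bar> ^ DIM('a) * (\<integral>x. f (t *\<^sub>R x) \<partial>lborel)"
    by simp
  finally show ?thesis .
qed

locale dens =
  fixes g :: "'a::euclidean_space \<Rightarrow> real" and B :: real
  assumes cont: "continuous_on UNIV g" and nn: "\<And>x. 0 \<le> g x" and bd: "\<And>x. g x \<le> B"
    and int: "integrable lborel g" and tot: "integral\<^sup>L lborel g = 1"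
begin

lemma meas[measurable]: "g \<in> borel_measurable borel"
  using cont by (rule borel_measurable_continuous_onI)

lemma int_ind: "A \<in> sets borel \<Longrightarrow> integrable lborel (\<lambda>x. indicator A x * g x)"
  using integrable_real_mult_indicator[of A lborel g] int by (simp add: mult.commute)

lemma GG_nonneg: "0 \<le> GG g A"
  unfolding GG_def by (rule integral_nonneg_AE) (auto simp: nn)

lemma GG_mono:
  assumes "A \<subseteq> C" "A \<in> sets borel" "C \<in> sets borel"
  shows "GG g A \<le> GG g C"
  unfolding GG_def using assms
  by (intro integral_mono int_ind) (auto simp: nn indicator_def)

lemma B_nonneg: "0 \<le> B" using nn[of 0] bd[of 0] by simp

lemma slab_small:
  assumes c: "0 < c"
  shows "\<exists>r>0. \<forall>u\<in>Sph. GG g {x. \<bar>x \<bullet> u\<bar> \<le> r} < c"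
proof (rule ccontr)
  assume "\<not> ?thesis"
  then have "\<forall>k::nat. \<exists>u\<in>Sph. c \<le> GG g {x. \<bar>x \<bullet> u\<bar> \<le> 1 / Suc k}"
    by (metis not_less of_nat_0_less_iff zero_less_Suc zero_less_divide_1_iff)
  then obtain u where u: "\<And>k. u k \<in> Sph" "\<And>k. c \<le> GG g {x. \<bar>x \<bullet> u k\<bar> \<le> 1 / Suc k}"
    by metis
  obtain l \<sigma> where l: "l \<in> Sph" "strict_mono \<sigma>" "(u \<circ> \<sigma>) \<longlonglongrightarrow> l"
    using compact_sphere[of "0::'a" 1] u(1)
    unfolding compact_eq_seq_compact_metric seq_compact_def by metis
  have l0: "l \<noteq> 0" using l(1) by auto
  define S where "S k = {x. \<bar>x \<bullet> u (\<sigma> k)\<bar> \<le> 1 / Suc (\<sigma> k)}" for k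
  have Sb: "S k \<in> sets borel" for k
    unfolding S_def by (intro borel_closed closed_Collect_le) (auto intro!: continuous_intros)
  have lim: "(\<lambda>k. GG g (S k)) \<longlonglongrightarrow> (\<integral>x. 0 \<partial>(lborel::'a measure))"
    unfolding GG_def
  proof (rule integral_dominated_convergence[where w=g])
    show "(\<lambda>x. 0::real) \<in> borel_measurable lborel" by simp
    show "(\<lambda>x. indicator (S k) x * g x) \<in> borel_measurable lborel" for k
      using Sb[of k] by measurable
    show "integrable lborel g" by (rule int)
    show "AE x in lborel. norm (indicator (S k) x * g x) \<le> g x" for k
      by (auto simp: nn indicator_def)
    have "AE x in lborel. x \<notin> {x. x \<bullet> l = 0}"
      using hyperplane_null[OF l0] by (rule AE_not_in)
    then show "AE x in lborel. (\<lambda>k. indicator (S k) x * g x) \<longlonglongrightarrow> 0"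
    proof eventually_elim
      fix x assume "x \<notin> {x. x \<bullet> l = 0}"
      then have pos: "0 < \<bar>x \<bullet> l\<bar>" by simp
      have t1: "(\<lambda>k. \<bar>x \<bullet> u (\<sigma> k)\<bar>) \<longlonglongrightarrow> \<bar>x \<bullet> l\<bar>"
        using l(3) by (auto simp: o_def intro!: tendsto_intros)
      have t2: "(\<lambda>k. 1 / real (Suc (\<sigma> k))) \<longlonglongrightarrow> 0"
      proof -
        have "(\<lambda>k. 1 / real (Suc k)) \<longlonglongrightarrow> 0" by (rule LIMSEQ_Suc[OF lim_const_over_n[of 1]])
        then show ?thesis using LIMSEQ_subseq_LIMSEQ[OF _ l(2)] by (simp add: o_def)
      qed
      have "eventually (\<lambda>k. \<bar>x \<bullet> l\<bar> / 2 < \<bar>x \<bullet> u (\<sigma> k)\<bar>) sequentially"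
        using t1 pos by (intro order_tendstoD) auto
      moreover have "eventually (\<lambda>k. 1 / real (Suc (\<sigma> k)) < \<bar>x \<bullet> l\<bar> / 2) sequentially"
        using t2 pos by (intro order_tendstoD) auto
      ultimately have "eventually (\<lambda>k. indicator (S k) x * g x = 0) sequentially"
        by eventually_elim (auto simp: S_def indicator_def)
      then show "(\<lambda>k. indicator (S k) x * g x) \<longlonglongrightarrow> 0"
        by (rule tendsto_eventually)
    qed
  qed
  then have lim0: "(\<lambda>k. GG g (S k)) \<longlonglongrightarrow> 0" by simp
  have "\<exists>N. \<forall>k\<ge>N. c \<le> GG g (S k)" using u(2) by (auto simp: S_def)
  with lim0 have "c \<le> 0" by (rule LIMSEQ_le_const)
  then show False using c by simp
qed


lemma GG_usc:
  assumes KB: "\<And>i. K i \<in> sets borel" "L \<in> sets borel"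
    and ev: "\<And>x. x \<notin> L \<Longrightarrow> eventually (\<lambda>i. x \<notin> K i) sequentially"
    and ge: "\<And>i. c \<le> GG g (K i)"
  shows "c \<le> GG g L"
proof -
  have lim: "(\<lambda>i. GG g (K i \<union> L)) \<longlonglongrightarrow> GG g L"
    unfolding GG_def
  proof (rule integral_dominated_convergence[where w=g])
    show "(\<lambda>x. indicator L x * g x) \<in> borel_measurable lborel" using KB(2) by measurable
    show "(\<lambda>x. indicator (K i \<union> L) x * g x) \<in> borel_measurable lborel" for i
      using KB by measurable
    show "integrable lborel g" by (rule int)
    show "AE x in lborel. norm (indicator (K i \<union> L) x * g x) \<le> g x" for i
      by (auto simp: nn indicator_def)
    show "AE x in lborel. (\<lambda>i. indicator (K i \<union> L) x * g x) \<longlonglongrightarrow> indicator L x * g x"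
    proof (rule AE_I2)
      fix x
      show "(\<lambda>i. indicator (K i \<union> L) x * g x) \<longlonglongrightarrow> indicator L x * g x"
      proof (cases "x \<in> L")
        case True then show ?thesis by (simp add: indicator_def)
      next
        case False
        have "eventually (\<lambda>i. indicator (K i \<union> L) x * g x = indicator L x * g x) sequentially"
          using ev[OF False] by eventually_elim (use False in \<open>simp add: indicator_def\<close>)
        then show ?thesis by (rule tendsto_eventually)
      qed
    qed
  qed
  have m: "GG g (K i) \<le> GG g (K i \<union> L)" for i
    by (rule GG_mono) (use KB in auto)
  have "\<exists>N. \<forall>i\<ge>N. c \<le> GG g (K i \<union> L)"
    using ge m order_trans by blast
  with lim show ?thesis by (rule LIMSEQ_le_const)
qed

lemma GG_scale:
  assumes t: "t \<noteq> 0" and Ac: "compact A"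
  shows "GG g ((*\<^sub>R) t ` A) = \<bar>t\<bar> ^ DIM('a) * (\<integral>y. indicator A y * g (t *\<^sub>R y) \<partial>lborel)"
proof -
  have A: "A \<in> sets lborel" using Ac by (simp add: borel_compact)
  have tA: "(*\<^sub>R) t ` A \<in> sets borel"
    using compact_scaling[OF Ac, of t] by (intro borel_compact) simp
  have "GG g ((*\<^sub>R) t ` A) = \<bar>t\<bar> ^ DIM('a) * (\<integral>y. indicator ((*\<^sub>R) t ` A) (t *\<^sub>R y) * g (t *\<^sub>R y) \<partial>lborel)"
    unfolding GG_def
    by (intro lborel_integral_scale t borel_measurable_times borel_measurable_indicator tA meas)
  also have "(\<lambda>y. indicator ((*\<^sub>R) t ` A) (t *\<^sub>R y)) = (indicator A :: 'a \<Rightarrow> real)"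
    using t by (auto simp: indicator_def fun_eq_iff image_iff)
  finally show ?thesis by simp
qed


lemma ind_int:
  fixes A :: "'a set"
  assumes "compact A"
  shows "integrable lborel (\<lambda>y. indicator A y * (C::real))"
proof -
  have "integrable lborel (indicator A :: 'a \<Rightarrow> real)"
    using emeasure_compact_finite[OF assms] borel_compact[OF assms]
    by (simp add: integrable_indicator_iff)
  then show ?thesis by (rule integrable_mult_left)
qed

lemma gscale_meas: "(\<lambda>y. g (t *\<^sub>R y)) \<in> borel_measurable lborel"
proof -
  have "continuous_on UNIV (\<lambda>y. g (t *\<^sub>R y))"
    by (rule continuous_on_compose2[OF cont]) (auto intro!: continuous_intros)
  then show ?thesis using borel_measurable_continuous_onI by simp
qed

lemma psi_cont:
  assumes Ac: "compact A"
  shows "continuous_on {0<..} (\<lambda>t. \<integral>y. indicator A y * g (t *\<^sub>R y) \<partial>lborel)"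
proof (rule continuous_on_sequentiallyI)
  have A: "A \<in> sets lborel" using Ac by (simp add: borel_compact)
  fix u :: "nat \<Rightarrow> real" and a :: real
  assume u: "\<forall>n. u n \<in> {0<..}" "a \<in> {0<..}" "u \<longlonglongrightarrow> a"
  show "(\<lambda>n. \<integral>y. indicator A y * g (u n *\<^sub>R y) \<partial>lborel) \<longlonglongrightarrow> (\<integral>y. indicator A y * g (a *\<^sub>R y) \<partial>lborel)"
  proof (rule integral_dominated_convergence[where w="\<lambda>y. indicator A y * B"])
    show "(\<lambda>y. indicator A y * g (a *\<^sub>R y)) \<in> borel_measurable lborel"
      by (intro borel_measurable_times borel_measurable_indicator A gscale_meas)
    show "(\<lambda>y. indicator A y * g (u n *\<^sub>R y)) \<in> borel_measurable lborel" for n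
      by (intro borel_measurable_times borel_measurable_indicator A gscale_meas)
    show "integrable lborel (\<lambda>y. indicator A y * B)" by (rule ind_int[OF Ac])
    show "AE y in lborel. norm (indicator A y * g (u n *\<^sub>R y)) \<le> indicator A y * B" for n
      by (auto simp: nn bd indicator_def)
    show "AE y in lborel. (\<lambda>n. indicator A y * g (u n *\<^sub>R y)) \<longlonglongrightarrow> indicator A y * g (a *\<^sub>R y)"
    proof (rule AE_I2)
      fix y
      have "isCont g (a *\<^sub>R y)" using cont by (simp add: continuous_on_eq_continuous_at)
      moreover have "(\<lambda>n. u n *\<^sub>R y) \<longlonglongrightarrow> a *\<^sub>R y" using u(3) by (intro tendsto_intros)
      ultimately have "(\<lambda>n. g (u n *\<^sub>R y)) \<longlonglongrightarrow> g (a *\<^sub>R y)" by (rule isCont_tendsto_compose)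
      then show "(\<lambda>n. indicator A y * g (u n *\<^sub>R y)) \<longlonglongrightarrow> indicator A y * g (a *\<^sub>R y)"
        by (intro tendsto_intros)
    qed
  qed
qed

lemma psi_bound:
  assumes Ac: "compact A"
  shows "(\<integral>y. indicator A y * g (t *\<^sub>R y) \<partial>lborel) \<le> B * measure lborel A"
proof -
  have A: "A \<in> sets lborel" using Ac by (simp add: borel_compact)
  have "(\<integral>y. indicator A y * g (t *\<^sub>R y) \<partial>lborel) \<le> (\<integral>y. indicator A y * B \<partial>lborel)"
  proof (rule integral_mono)
    show "integrable lborel (\<lambda>y. indicator A y * B)" by (rule ind_int[OF Ac])
    show "integrable lborel (\<lambda>y. indicator A y * g (t *\<^sub>R y))"
    proof (rule Bochner_Integration.integrable_bound[OF ind_int[OF Ac, of B]])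
      show "(\<lambda>y. indicator A y * g (t *\<^sub>R y)) \<in> borel_measurable lborel"
        by (intro borel_measurable_times borel_measurable_indicator A gscale_meas)
      show "AE y in lborel. norm (indicator A y * g (t *\<^sub>R y)) \<le> norm (indicator A y * B)"
        using B_nonneg by (auto simp: nn bd indicator_def)
    qed
    show "indicator A y * g (t *\<^sub>R y) \<le> indicator A y * B" for y
      by (auto simp: bd indicator_def)
  qed
  also have "\<dots> = B * measure lborel A"
    using ind_int[OF Ac, of 1] by simp
  finally show ?thesis .
qed

lemma GG_ivt:
  assumes Ac: "compact A" and c: "0 < c" "c \<le> GG g A"
  shows "\<exists>t. 0 < t \<and> t \<le> 1 \<and> GG g ((*\<^sub>R) t ` A) = c"
proof -
  define m where "m = measure lborel A"
  have m0: "0 \<le> m" by (simp add: m_def)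
  define \<psi> where "\<psi> t = (\<integral>y. indicator A y * g (t *\<^sub>R y) \<partial>lborel)" for t
  have phi: "GG g ((*\<^sub>R) t ` A) = t ^ DIM('a) * \<psi> t" if "0 < t" for t
    using GG_scale[of t A] that Ac by (simp add: \<psi>_def)
  define t0 where "t0 = min 1 (c / (2 * (B * m + 1)))"
  have Bm: "0 \<le> B * m" using B_nonneg m0 by simp
  have t0: "0 < t0" "t0 \<le> 1" using c Bm by (auto simp: t0_def)
  have "GG g ((*\<^sub>R) t0 ` A) = t0 ^ DIM('a) * \<psi> t0" by (rule phi[OF t0(1)])
  also have "\<dots> \<le> t0 ^ DIM('a) * (B * m)"
    using psi_bound[OF Ac, of t0] t0 by (intro mult_left_mono) (auto simp: \<psi>_def m_def)
  also have "\<dots> \<le> t0 * (B * m)"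
  proof (rule mult_right_mono[OF _ Bm])
    have "t0 ^ DIM('a) = t0 * t0 ^ (DIM('a) - 1)"
      by (metis DIM_positive Suc_diff_1 power_Suc)
    also have "\<dots> \<le> t0 * 1" using t0 by (intro mult_left_mono power_le_one) auto
    finally show "t0 ^ DIM('a) \<le> t0" by simp
  qed
  also have "\<dots> < c"
  proof -
    have "t0 * (B * m) \<le> c / (2 * (B * m + 1)) * (B * m)"
      using Bm by (intro mult_right_mono) (auto simp: t0_def)
    also have "\<dots> < c"
    proof -
      have d: "0 < 2 * (B * m + 1)" using Bm by simp
      have "c * (B * m) < c * (2 * (B * m + 1))" using c Bm by (intro mult_strict_left_mono) auto
      then have "c * (B * m) / (2 * (B * m + 1)) < c" using d by (simp add: divide_less_eq)
      then show ?thesis by simp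
    qed
    finally show ?thesis .
  qed
  finally have lo: "GG g ((*\<^sub>R) t0 ` A) \<le> c" by simp
  have hi: "c \<le> GG g ((*\<^sub>R) 1 ` A)" using c by simp
  have "continuous_on {t0..1} (\<lambda>t. t ^ DIM('a) * \<psi> t)"
    using psi_cont[OF Ac] t0 unfolding \<psi>_def
    by (intro continuous_intros) (auto elim: continuous_on_subset)
  then have "continuous_on {t0..1} (\<lambda>t. GG g ((*\<^sub>R) t ` A))"
    by (rule continuous_on_cong[THEN iffD1, rotated 2]) (use phi t0 in auto)
  then obtain t where tt: "t0 \<le> t" "t \<le> 1" "GG g ((*\<^sub>R) t ` A) = c"
    using IVT'[of "\<lambda>t. GG g ((*\<^sub>R) t ` A)" t0 c 1] lo hi t0 by auto
  have "0 < t" using tt(1) t0(1) by linarith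
  then show ?thesis using tt(2,3) by blast
qed

lemma big_ball:
  assumes "c < 1"
  shows "\<exists>T>0. c < GG g (cball 0 T)"
proof -
  have lim: "(\<lambda>k. GG g (cball 0 (Suc k))) \<longlonglongrightarrow> integral\<^sup>L lborel g"
    unfolding GG_def
  proof (rule integral_dominated_convergence[where w=g])
    show "g \<in> borel_measurable lborel" by simp
    show "(\<lambda>x. indicator (cball 0 (Suc k)) x * g x) \<in> borel_measurable lborel" for k
      by (intro borel_measurable_times borel_measurable_indicator) (auto simp: borel_closed)
    show "integrable lborel g" by (rule int)
    show "AE x in lborel. norm (indicator (cball 0 (Suc k)) x * g x) \<le> g x" for k
      by (auto simp: nn indicator_def)
    show "AE x in lborel. (\<lambda>k. indicator (cball 0 (Suc k)) x * g x) \<longlonglongrightarrow> g x"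
    proof (rule AE_I2)
      fix x :: 'a
      obtain N :: nat where "norm x \<le> N" using real_arch_simple by blast
      then have "eventually (\<lambda>k. indicator (cball 0 (Suc k)) x * g x = g x) sequentially"
        by (intro eventually_sequentiallyI[of N]) (auto simp: indicator_def)
      then show "(\<lambda>k. indicator (cball 0 (Suc k)) x * g x) \<longlonglongrightarrow> g x" by (rule tendsto_eventually)
    qed
  qed
  then have "eventually (\<lambda>k. c < GG g (cball 0 (Suc k))) sequentially"
    using assms tot by (intro order_tendstoD) auto
  then obtain k where "c < GG g (cball 0 (Suc k))" by (auto dest: eventually_happens)
  then show ?thesis by (intro exI[of _ "real (Suc k)"]) auto
qed

end

lemma La:
  fixes r \<alpha> :: real assumes r: "0 \<le> r" and a: "0 < \<alpha>"
  shows "(1 + r) powr \<alpha> \<le> 2 powr \<alpha> * (1 + r powr \<alpha>)"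
proof (cases "r \<le> 1")
  case True
  have "(1 + r) powr \<alpha> \<le> 2 powr \<alpha>" using True r a by (intro powr_mono2) auto
  also have "\<dots> \<le> 2 powr \<alpha> * (1 + r powr \<alpha>)" by simp
  finally show ?thesis .
next
  case False
  have "(1 + r) powr \<alpha> \<le> (2 * r) powr \<alpha>" using False r a by (intro powr_mono2) auto
  also have "\<dots> = 2 powr \<alpha> * r powr \<alpha>" using r by (simp add: powr_mult)
  also have "\<dots> \<le> 2 powr \<alpha> * (1 + r powr \<alpha>)" by simp
  finally show ?thesis .
qed

lemma Lb:
  fixes r \<alpha> a E D :: real
  assumes r: "0 \<le> r" and al: "0 < \<alpha>" and a: "0 < a" and E: "0 < E" and D: "D \<le> \<alpha> * E"
  shows "(1 + a * r powr \<alpha>) powr (- E) \<le> (min 1 a / 2 powr \<alpha>) powr (- E) * (1 + r) powr (- D)"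
proof -
  define m where "m = min 1 a / 2 powr \<alpha>"
  have m: "0 < m" using a by (simp add: m_def)
  have "m * (1 + r) powr \<alpha> \<le> min 1 a / 2 powr \<alpha> * (2 powr \<alpha> * (1 + r powr \<alpha>))"
    unfolding m_def using La[OF r al] a by (intro mult_left_mono) auto
  also have "\<dots> = min 1 a * (1 + r powr \<alpha>)" by simp
  also have "\<dots> \<le> 1 + a * r powr \<alpha>"
  proof -
    have "min 1 a * (1 + r powr \<alpha>) = min 1 a + min 1 a * r powr \<alpha>" by (simp add: algebra_simps)
    also have "\<dots> \<le> 1 + a * r powr \<alpha>"
      by (intro add_mono mult_right_mono) auto
    finally show ?thesis .
  qed
  finally have base: "m * (1 + r) powr \<alpha> \<le> 1 + a * r powr \<alpha>" .
  have pos: "0 < m * (1 + r) powr \<alpha>" using m r by simp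
  have "m powr E * (1 + r) powr D \<le> m powr E * (1 + r) powr (\<alpha> * E)"
    using D r m by (intro mult_left_mono powr_mono) auto
  also have "\<dots> = (m * (1 + r) powr \<alpha>) powr E"
    using m r by (simp add: powr_mult powr_powr)
  also have "\<dots> \<le> (1 + a * r powr \<alpha>) powr E"
    using base pos E by (intro powr_mono2) auto
  finally have ineq: "m powr E * (1 + r) powr D \<le> (1 + a * r powr \<alpha>) powr E" .
  have p1: "0 < m powr E * (1 + r) powr D" using m r by simp
  have "(1 + a * r powr \<alpha>) powr (- E) = 1 / (1 + a * r powr \<alpha>) powr E"
    by (simp add: powr_minus divide_inverse)
  also have "\<dots> \<le> 1 / (m powr E * (1 + r) powr D)"
  proof (rule divide_left_mono)
    show "m powr E * (1 + r) powr D \<le> (1 + a * r powr \<alpha>) powr E" by (rule ineq)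
    have "0 < 1 + a * r powr \<alpha>" using a by (simp add: add_pos_nonneg)
    then have "0 < (1 + a * r powr \<alpha>) powr E" by simp
    then show "0 < (1 + a * r powr \<alpha>) powr E * (m powr E * (1 + r) powr D)"
      using p1 by (rule mult_pos_pos)
  qed simp
  also have "\<dots> = m powr (- E) * (1 + r) powr (- D)"
    by (simp add: powr_minus divide_inverse)
  finally show ?thesis unfolding m_def .
qed

lemma Lexp:
  fixes y :: real and N :: nat assumes y: "0 \<le> y" and N: "1 \<le> N"
  shows "(1 + y) ^ N \<le> real N ^ N * exp y"
proof -
  have "1 + y \<le> real N * (1 + y / real N)" using N y by (simp add: field_simps)
  then have "(1 + y) ^ N \<le> (real N * (1 + y / real N)) ^ N" using y by (intro power_mono) auto
  also have "\<dots> = real N ^ N * (1 + y / real N) ^ N" by (simp add: power_mult_distrib)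
  also have "\<dots> \<le> real N ^ N * exp (y / real N) ^ N"
    using y N by (intro mult_left_mono power_mono) (auto simp: exp_ge_add_one_self add_nonneg_nonneg)
  also have "exp (y / real N) ^ N = exp y"
    using N by (simp add: exp_of_nat_mult[symmetric])
  finally show ?thesis .
qed

lemma Lc:
  fixes \<alpha> D :: real assumes al: "0 < \<alpha>" and D: "0 < D"
  shows "\<exists>C. \<forall>r\<ge>0. exp (- (r powr \<alpha>) / \<alpha>) \<le> C * (1 + r) powr (- D)"
proof -
  define N :: nat where "N = nat \<lceil>D / \<alpha>\<rceil> + 1"
  have N1: "1 \<le> N" by (simp add: N_def)
  have ND: "D \<le> \<alpha> * real N"
  proof -
    have "D / \<alpha> \<le> real N" unfolding N_def by linarith
    then show ?thesis using al by (simp add: field_simps)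
  qed
  define K where "K = (2 powr \<alpha> * max 1 \<alpha> * real N) ^ N"
  have K: "0 < K" using N1 by (simp add: K_def)
  show ?thesis
  proof (intro exI allI impI)
    fix r :: real assume r: "0 \<le> r"
    define y where "y = r powr \<alpha> / \<alpha>"
    have y: "0 \<le> y" using al by (simp add: y_def)
    have "(1 + r) powr D \<le> (1 + r) powr (\<alpha> * real N)" using ND r by (intro powr_mono) auto
    also have "\<dots> = ((1 + r) powr \<alpha>) ^ N"
      using r by (simp add: powr_powr[symmetric] powr_realpow)
    also have "\<dots> \<le> (2 powr \<alpha> * (1 + r powr \<alpha>)) ^ N"
      using La[OF r al] r by (intro power_mono) auto
    also have "1 + r powr \<alpha> \<le> max 1 \<alpha> * (1 + y)"
    proof -
      have "1 + r powr \<alpha> = 1 + \<alpha> * y" using al by (simp add: y_def)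
      also have "\<dots> \<le> max 1 \<alpha> + max 1 \<alpha> * y" using y by (intro add_mono mult_right_mono) auto
      finally show ?thesis by (simp add: algebra_simps)
    qed
    then have "(2 powr \<alpha> * (1 + r powr \<alpha>)) ^ N \<le> (2 powr \<alpha> * (max 1 \<alpha> * (1 + y))) ^ N"
      by (intro power_mono mult_left_mono) (auto intro: add_nonneg_nonneg)
    also have "\<dots> = (2 powr \<alpha> * max 1 \<alpha>) ^ N * (1 + y) ^ N"
      by (simp add: power_mult_distrib mult.assoc)
    also have "\<dots> \<le> (2 powr \<alpha> * max 1 \<alpha>) ^ N * (real N ^ N * exp y)"
      using Lexp[OF y N1] by (intro mult_left_mono) auto
    also have "\<dots> = K * exp y" by (simp add: K_def power_mult_distrib)
    finally have ineq: "(1 + r) powr D \<le> K * exp y" .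
    have "exp (- (r powr \<alpha>) / \<alpha>) = 1 / exp y" by (simp add: y_def exp_minus divide_inverse)
    also have "\<dots> \<le> K / (1 + r) powr D"
      using ineq r K by (simp add: field_simps)
    also have "\<dots> = K * (1 + r) powr (- D)" by (simp add: powr_minus divide_inverse)
    finally show "exp (- (r powr \<alpha>) / \<alpha>) \<le> K * (1 + r) powr (- D)" .
  qed
qed

lemma e_pos:
  fixes n \<alpha> q :: real
  assumes al: "0 < \<alpha>" and n: "0 \<le> n" and q: "0 < q" "q < \<alpha> / (n + \<alpha>)"
  shows "0 < 1 / q - n / \<alpha> - 1"
proof -
  have "q * (n + \<alpha>) < \<alpha>" using q al n by (simp add: less_divide_eq)
  then have "n + \<alpha> < \<alpha> / q" using q by (simp add: less_divide_eq mult.commute)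
  then have "n / \<alpha> + 1 < 1 / q" using al q by (simp add: field_simps)
  then show ?thesis by simp
qed

lemma b1_lem:
  fixes q \<alpha> :: real
  assumes "q < 0" "0 < \<alpha>"
  shows "1 \<le> 1 - q / \<alpha> * norm x powr \<alpha>"
proof -
  have "q / \<alpha> \<le> 0" using assms by (simp add: divide_nonpos_pos)
  then have "q / \<alpha> * norm x powr \<alpha> \<le> 0" by (rule mult_nonpos_nonneg) simp
  then show ?thesis by simp
qed

lemma g_raw_nonneg: "0 \<le> g_raw \<alpha> q x"
  by (simp add: g_raw_def)

lemma g_raw_0: "0 < \<alpha> \<Longrightarrow> g_raw \<alpha> q 0 = 1"
  by (simp add: g_raw_def)

lemma g_raw_le1:
  fixes x :: "'a::euclidean_space"
  assumes al: "0 < \<alpha>" and q: "q < \<alpha> / (real DIM('a) + \<alpha>)"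
  shows "g_raw \<alpha> q x \<le> 1"
proof -
  define e where "e = 1 / q - real DIM('a) / \<alpha> - 1"
  consider "q = 0" | "0 < q" | "q < 0" by linarith
  then show ?thesis
  proof cases
    case 1 then show ?thesis using al by (simp add: g_raw_def)
  next
    case 2
    have e: "0 < e" unfolding e_def using e_pos[OF al _ 2 q] by simp
    have b: "\<bar>max 0 (1 - q / \<alpha> * norm x powr \<alpha>)\<bar> \<le> 1" using 2 al by auto
    show ?thesis using 2 powr_le1[OF _ b, of e] e by (simp add: g_raw_def e_def)
  next
    case 3
    have "1 / q < 0" using 3 by simp
    moreover have "0 \<le> real DIM('a) / \<alpha>" using al by simp
    ultimately have e: "e < 0" unfolding e_def by linarith
    have b1: "1 \<le> 1 - q / \<alpha> * norm x powr \<alpha>"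
      using 3 al by (rule b1_lem)
    then have bm: "max 0 (1 - q / \<alpha> * norm x powr \<alpha>) = 1 - q / \<alpha> * norm x powr \<alpha>" by simp
    define X where "X = 1 - q / \<alpha> * norm x powr \<alpha>"
    have X1: "1 \<le> X" using b1 by (simp add: X_def)
    have "1 \<le> X powr (- e)" using X1 e by (intro ge_one_powr_ge_zero) auto
    moreover have "X powr e = inverse (X powr (- e))" using X1 by (simp add: powr_minus)
    ultimately have "X powr e \<le> inverse 1" by (metis le_imp_inverse_le zero_less_one)
    then have "(1 - q / \<alpha> * norm x powr \<alpha>) powr e \<le> 1" by (simp add: X_def)
    then show ?thesis using 3 bm by (simp add: g_raw_def e_def)
  qed
qed

lemma g_raw_cont:
  assumes al: "0 < \<alpha>" and q: "q < \<alpha> / (real DIM('a) + \<alpha>)"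
  shows "continuous_on UNIV (g_raw \<alpha> q :: 'a::euclidean_space \<Rightarrow> real)"
proof -
  define e where "e = 1 / q - real DIM('a) / \<alpha> - 1"
  have np: "continuous_on UNIV (\<lambda>x::'a. norm x powr \<alpha>)"
    using al by (intro continuous_on_powr') (auto intro: continuous_intros)
  consider "q = 0" | "0 < q" | "q < 0" by linarith
  then show ?thesis
  proof cases
    case 1
    have "continuous_on UNIV (\<lambda>x::'a. exp (- (norm x powr \<alpha>) / \<alpha>))"
      using al by (intro continuous_on_exp continuous_on_divide continuous_on_minus np continuous_on_const) auto
    then show ?thesis using 1 by (simp add: g_raw_def[abs_def])
  next
    case 2
    have e: "0 < e" unfolding e_def using e_pos[OF al _ 2 q] by simp
    have "continuous_on UNIV (\<lambda>x::'a. (max 0 (1 - q / \<alpha> * norm x powr \<alpha>)) powr e)"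
      using np e al by (intro continuous_on_powr' continuous_intros) auto
    then show ?thesis using 2 by (simp add: g_raw_def[abs_def] e_def)
  next
    case 3
    have b1: "1 \<le> 1 - q / \<alpha> * norm x powr \<alpha>" for x :: 'a
      using 3 al by (rule b1_lem)
    have nz0: "max 0 (1 - q / \<alpha> * norm x powr \<alpha>) \<noteq> 0" for x :: 'a
      using b1[of x] by linarith
    have nz: "\<forall>x::'a\<in>UNIV. max 0 (1 - q / \<alpha> * norm x powr \<alpha>) \<noteq> 0"
      using nz0 by blast
    have cb: "continuous_on UNIV (\<lambda>x::'a. max 0 (1 - q / \<alpha> * norm x powr \<alpha>))"
      by (intro continuous_on_max continuous_on_diff continuous_on_mult continuous_on_const np)
    have "continuous_on UNIV (\<lambda>x::'a. (max 0 (1 - q / \<alpha> * norm x powr \<alpha>)) powr e)"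
      by (rule continuous_on_powr[OF cb continuous_on_const nz])
    then show ?thesis using 3 by (simp add: g_raw_def[abs_def] e_def)
  qed
qed

lemma g_raw_decay:
  assumes al: "0 < \<alpha>" and q: "q < \<alpha> / (real DIM('a) + \<alpha>)"
  shows "\<exists>C. \<forall>x::'a::euclidean_space. g_raw \<alpha> q x \<le> C * (1 + norm x) powr (- (real DIM('a) + \<alpha>))"
proof -
  define n where "n = real DIM('a)"
  define D where "D = n + \<alpha>"
  have D: "0 < D" using al by (simp add: D_def n_def)
  define e where "e = 1 / q - n / \<alpha> - 1"
  consider "q = 0" | "0 < q" | "q < 0" by linarith
  then have "\<exists>C. \<forall>x::'a. g_raw \<alpha> q x \<le> C * (1 + norm x) powr (- D)"
  proof cases
    case 1
    obtain C where C: "\<forall>r\<ge>0. exp (- (r powr \<alpha>) / \<alpha>) \<le> C * (1 + r) powr (- D)"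
      using Lc[OF al D] by blast
    show ?thesis using 1 C by (intro exI[of _ C]) (auto simp: g_raw_def)
  next
    case 2
    have e: "0 < e" unfolding e_def n_def using e_pos[OF al _ 2 q] by simp
    define \<rho> where "\<rho> = (\<alpha> / q) powr (1 / \<alpha>)"
    have rho: "0 \<le> \<rho>" by (simp add: \<rho>_def)
    show ?thesis
    proof (intro exI allI)
      fix x :: 'a
      show "g_raw \<alpha> q x \<le> (1 + \<rho>) powr D * (1 + norm x) powr (- D)"
      proof (cases "norm x \<le> \<rho>")
        case True
        have "g_raw \<alpha> q x \<le> 1" using g_raw_le1[OF al q] by blast
        also have "1 = (1 + norm x) powr D * (1 + norm x) powr (- D)"
        proof -
          have "0 < 1 + norm x" by (simp add: add_pos_nonneg)
          then have "0 < (1 + norm x) powr D" by simp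
          then show ?thesis by (simp add: powr_minus)
        qed
        also have "\<dots> \<le> (1 + \<rho>) powr D * (1 + norm x) powr (- D)"
          using True D by (intro mult_right_mono powr_mono2) auto
        finally show ?thesis .
      next
        case False
        then have "\<rho> < norm x" by simp
        then have "\<rho> powr \<alpha> < norm x powr \<alpha>" using rho al by (intro powr_less_mono2) auto
        moreover have "\<rho> powr \<alpha> = \<alpha> / q" using al 2 by (simp add: \<rho>_def powr_powr)
        ultimately have "\<alpha> / q < norm x powr \<alpha>" by simp
        then have "1 < q / \<alpha> * norm x powr \<alpha>" using al 2 by (simp add: field_simps)
        then have "max 0 (1 - q / \<alpha> * norm x powr \<alpha>) = 0" by simp
        then have "g_raw \<alpha> q x = 0" using 2 by (simp add: g_raw_def)
        then show ?thesis by simp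
      qed
    qed
  next
    case 3
    define a where "a = - q / \<alpha>"
    define E where "E = - e"
    have a: "0 < a" using 3 al by (simp add: a_def divide_neg_pos)
    have "1 / q < 0" using 3 by simp
    moreover have "0 \<le> n / \<alpha>" using al by (simp add: n_def)
    ultimately have E: "0 < E" unfolding E_def e_def by linarith
    have DE: "D \<le> \<alpha> * E"
    proof -
      have "\<alpha> * E = - \<alpha> / q + n + \<alpha>" using al by (simp add: E_def e_def field_simps)
      moreover have "0 < - \<alpha> / q" using 3 al by (simp add: divide_pos_neg)
      ultimately show ?thesis by (simp add: D_def)
    qed
    show ?thesis
    proof (intro exI allI)
      fix x :: 'a
      have bm: "max 0 (1 - q / \<alpha> * norm x powr \<alpha>) = 1 + a * norm x powr \<alpha>"
        using b1_lem[OF 3 al, of x] by (simp add: a_def)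
      have "g_raw \<alpha> q x = (max 0 (1 - q / \<alpha> * norm x powr \<alpha>)) powr e"
        using 3 by (simp add: g_raw_def e_def n_def)
      also have "\<dots> = (1 + a * norm x powr \<alpha>) powr (- E)" by (simp only: bm E_def minus_minus)
      also have "\<dots> \<le> (min 1 a / 2 powr \<alpha>) powr (- E) * (1 + norm x) powr (- D)"
        by (rule Lb[OF _ al a E DE]) simp
      finally show "g_raw \<alpha> q x \<le> (min 1 a / 2 powr \<alpha>) powr (- E) * (1 + norm x) powr (- D)" .
    qed
  qed
  then show ?thesis by (simp add: D_def n_def)
qed

lemma k_finite:
  fixes \<delta> :: real assumes d: "0 < \<delta>"
  shows "(\<integral>\<^sup>+s. ennreal ((1 + \<bar>s\<bar>) powr (- (1 + \<delta>))) \<partial>lborel) < \<infinity>"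
proof -
  define f where "f s = (1 + s) powr (- (1 + \<delta>))" for s :: real
  define F where "F s = - ((1 + s) powr (- \<delta>)) / \<delta>" for s :: real
  have fm[measurable]: "f \<in> borel_measurable borel" unfolding f_def by measurable
  have der: "DERIV F x :> f x" if "0 \<le> x" for x
  proof -
    have "DERIV (\<lambda>s. (1 + s) powr (- \<delta>)) x :> (- \<delta>) * (1 + x) powr (- \<delta> - 1)"
      using that by (auto intro!: derivative_eq_intros)
    then have "DERIV F x :> - ((- \<delta>) * (1 + x) powr (- \<delta> - 1)) / \<delta>"
      unfolding F_def by (intro DERIV_cdivide DERIV_minus)
    moreover have "- ((- \<delta>) * (1 + x) powr (- \<delta> - 1)) / \<delta> = f x"
    proof -
      have "(1 + x) powr (- \<delta> - 1) = (1 + x) powr (- (1 + \<delta>))"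
        by (rule arg_cong[where f="\<lambda>e. (1 + x) powr e"]) simp
      then show ?thesis using d unfolding f_def by simp
    qed
    ultimately show ?thesis by simp
  qed
  have lim: "(F \<longlongrightarrow> 0) at_top"
  proof -
    have "((\<lambda>s::real. (1 + s) powr (- \<delta>)) \<longlongrightarrow> 0) at_top"
      using d by (intro tendsto_neg_powr filterlim_tendsto_add_at_top[OF tendsto_const filterlim_ident]) auto
    then have "((\<lambda>s::real. - ((1 + s) powr (- \<delta>)) / \<delta>) \<longlongrightarrow> - 0 / \<delta>) at_top"
      using d by (intro tendsto_divide tendsto_minus tendsto_const) auto
    then show ?thesis by (simp add: F_def[abs_def])
  qed
  have I: "(\<integral>\<^sup>+x. ennreal (f x) * indicator {0 ..} x \<partial>lborel) = 0 - F 0"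
    by (rule nn_integral_FTC_atLeast[OF fm der _ lim]) (auto simp: f_def)
  then have I': "(\<integral>\<^sup>+x. ennreal (f x) * indicator {0 ..} x \<partial>lborel) < \<infinity>" by simp
  have I2: "(\<integral>\<^sup>+x. ennreal (f (- x)) * indicator {0 ..} (- x) \<partial>lborel) = (\<integral>\<^sup>+x. ennreal (f x) * indicator {0 ..} x \<partial>lborel)"
    using nn_integral_real_affine[of "\<lambda>x. ennreal (f x) * indicator {0 ..} x" "-1" 0] by simp
  have "(\<integral>\<^sup>+s. ennreal ((1 + \<bar>s\<bar>) powr (- (1 + \<delta>))) \<partial>lborel)
      \<le> (\<integral>\<^sup>+x. ennreal (f x) * indicator {0 ..} x + ennreal (f (- x)) * indicator {0 ..} (- x) \<partial>lborel)"
    by (intro nn_integral_mono) (auto simp: f_def indicator_def)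
  also have "\<dots> = (\<integral>\<^sup>+x. ennreal (f x) * indicator {0 ..} x \<partial>lborel) + (\<integral>\<^sup>+x. ennreal (f (- x)) * indicator {0 ..} (- x) \<partial>lborel)"
    by (intro nn_integral_add) auto
  also have "\<dots> < \<infinity>" using I' I2 by simp
  finally show ?thesis .
qed


lemma w_int:
  fixes \<alpha> :: real assumes al: "0 < \<alpha>"
  shows "integrable lborel (\<lambda>x::'a::euclidean_space. (1 + norm x) powr (- (real DIM('a) + \<alpha>)))"
proof -
  define n where "n = real DIM('a)"
  have n: "0 < n" by (simp add: n_def)
  define \<delta> where "\<delta> = \<alpha> / n"
  have d: "0 < \<delta>" using al n by (simp add: \<delta>_def)
  define k where "k s = (1 + \<bar>s\<bar>) powr (- (1 + \<delta>))" for s :: real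
  have km[measurable]: "k \<in> borel_measurable borel" unfolding k_def by measurable
  have k0: "0 \<le> k s" for s by (simp add: k_def)
  define P where "P x = (\<Prod>b\<in>Basis. k (x \<bullet> b))" for x :: 'a
  have Pm: "P \<in> borel_measurable lborel" unfolding P_def by measurable
  have "(\<integral>\<^sup>+x. ennreal (P x) \<partial>lborel) = (\<integral>\<^sup>+x. (\<Prod>b\<in>Basis. ennreal (k ((x::'a) \<bullet> b))) \<partial>lborel)"
    unfolding P_def by (simp add: prod_ennreal k0)
  also have "\<dots> = (\<Prod>b\<in>(Basis::'a set). (\<integral>\<^sup>+s. ennreal (k s) \<partial>lborel))"
    by (rule nn_integral_lborel_prod) auto
  also have "\<dots> < \<infinity>"
    using k_finite[OF d] unfolding k_def by (simp add: power_less_top_ennreal)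
  finally have "(\<integral>\<^sup>+x. ennreal (P x) \<partial>lborel) < \<infinity>" .
  then have Pi: "integrable lborel P"
    by (intro integrableI_nonneg Pm) (auto simp: P_def k0 prod_nonneg)
  show ?thesis
  proof (rule Bochner_Integration.integrable_bound[OF Pi])
    show "(\<lambda>x::'a. (1 + norm x) powr (- (real DIM('a) + \<alpha>))) \<in> borel_measurable lborel"
      by measurable
    show "AE x in lborel. norm ((1 + norm x) powr (- (real DIM('a) + \<alpha>))) \<le> norm (P x)"
    proof (rule AE_I2)
      fix x :: 'a
      have z: "0 < 1 + norm x" by (simp add: add_pos_nonneg)
      have "(1 + norm x) powr (- (real DIM('a) + \<alpha>)) = ((1 + norm x) powr (- (1 + \<delta>))) powr n"
      proof -
        have ex: "- (real DIM('a) + \<alpha>) = - (1 + \<delta>) * n" using n by (simp add: \<delta>_def n_def field_simps)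
        show ?thesis by (simp only: ex powr_powr)
      qed
      also have "\<dots> = ((1 + norm x) powr (- (1 + \<delta>))) ^ DIM('a)"
        using z by (simp add: n_def powr_realpow)
      also have "\<dots> = (\<Prod>b\<in>(Basis::'a set). (1 + norm x) powr (- (1 + \<delta>)))"
        by simp
      also have "\<dots> \<le> P x"
        unfolding P_def k_def
      proof (rule prod_mono)
        fix b :: 'a assume b: "b \<in> Basis"
        have "(1 + norm x) powr (- (1 + \<delta>)) \<le> (1 + \<bar>x \<bullet> b\<bar>) powr (- (1 + \<delta>))"
          using Basis_le_norm[OF b, of x] d by (intro powr_mono2') auto
        then show "0 \<le> (1 + norm x) powr (- (1 + \<delta>)) \<and> (1 + norm x) powr (- (1 + \<delta>)) \<le> (1 + \<bar>x \<bullet> b\<bar>) powr (- (1 + \<delta>))"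
          by simp
      qed
      finally show "norm ((1 + norm x) powr (- (real DIM('a) + \<alpha>))) \<le> norm (P x)"
        by simp
    qed
  qed
qed

lemma g_raw_int:
  assumes al: "0 < \<alpha>" and q: "q < \<alpha> / (real DIM('a) + \<alpha>)"
  shows "integrable lborel (g_raw \<alpha> q :: 'a::euclidean_space \<Rightarrow> real)"
proof -
  obtain C where C: "\<And>x::'a. g_raw \<alpha> q x \<le> C * (1 + norm x) powr (- (real DIM('a) + \<alpha>))"
    using g_raw_decay[OF al q] by blast
  have Ci: "integrable lborel (\<lambda>x::'a. C * (1 + norm x) powr (- (real DIM('a) + \<alpha>)))"
    using w_int[OF al] by (rule integrable_mult_right)
  show ?thesis
  proof (rule Bochner_Integration.integrable_bound[OF Ci])
    show "(g_raw \<alpha> q :: 'a \<Rightarrow> real) \<in> borel_measurable lborel"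
      using g_raw_cont[OF al q] borel_measurable_continuous_onI by simp
    show "AE x in lborel. norm (g_raw \<alpha> q x) \<le> norm (C * (1 + norm (x::'a)) powr (- (real DIM('a) + \<alpha>)))"
    proof (rule AE_I2)
      fix x :: 'a
      have "0 \<le> g_raw \<alpha> q x" by (rule g_raw_nonneg)
      moreover have "g_raw \<alpha> q x \<le> C * (1 + norm x) powr (- (real DIM('a) + \<alpha>))" by (rule C)
      ultimately show "norm (g_raw \<alpha> q x) \<le> norm (C * (1 + norm x) powr (- (real DIM('a) + \<alpha>)))"
        by simp
    qed
  qed
qed

lemma Zc_pos:
  assumes al: "0 < \<alpha>" and q: "q < \<alpha> / (real DIM('a) + \<alpha>)"
  shows "0 < Zc \<alpha> q TYPE('a::euclidean_space)"
proof -
  have int: "integrable lborel (g_raw \<alpha> q :: 'a \<Rightarrow> real)" by (rule g_raw_int[OF al q])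
  have cont: "continuous_on UNIV (g_raw \<alpha> q :: 'a \<Rightarrow> real)" by (rule g_raw_cont[OF al q])
  have nn: "0 \<le> Zc \<alpha> q TYPE('a)"
    unfolding Zc_def by (rule integral_nonneg_AE) (simp add: g_raw_nonneg)
  have "Zc \<alpha> q TYPE('a) \<noteq> 0"
  proof
    assume "Zc \<alpha> q TYPE('a) = 0"
    then have AE0: "AE x::'a in lborel. g_raw \<alpha> q x = (0::real)"
      using integral_nonneg_eq_0_iff_AE[OF int] g_raw_nonneg unfolding Zc_def by (simp add: g_raw_nonneg)
    have g0: "g_raw \<alpha> q (0::'a) = 1" using g_raw_0[OF al] .
    have "isCont (g_raw \<alpha> q :: 'a \<Rightarrow> real) 0" using cont by (simp add: continuous_on_eq_continuous_at)
    then have "(g_raw \<alpha> q \<longlongrightarrow> 1) (at (0::'a))" using g0 unfolding isCont_def by simp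
    then have "eventually (\<lambda>x. 1/2 < g_raw \<alpha> q x) (at (0::'a))"
      by (rule order_tendstoD) simp
    then obtain e where e: "0 < e" "\<And>x::'a. x \<noteq> 0 \<Longrightarrow> dist x 0 < e \<Longrightarrow> 1/2 < g_raw \<alpha> q x"
      unfolding eventually_at by blast
    have sub: "ball (0::'a) e \<subseteq> {x\<in>space lborel. \<not> g_raw \<alpha> q x = 0}"
    proof
      fix x :: 'a assume x: "x \<in> ball 0 e"
      show "x \<in> {x\<in>space lborel. \<not> g_raw \<alpha> q x = 0}"
      proof (cases "x = 0")
        case True then show ?thesis using g0 by simp
      next
        case False then show ?thesis using e(2)[OF False] x by (simp add: dist_commute)
      qed
    qed
    have gm: "(g_raw \<alpha> q :: 'a \<Rightarrow> real) \<in> borel_measurable lborel"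
      using cont borel_measurable_continuous_onI by simp
    have "(g_raw \<alpha> q :: 'a \<Rightarrow> real) -` (UNIV - {0}) \<inter> space lborel \<in> sets (lborel::'a measure)"
      by (rule measurable_sets[OF gm]) simp
    moreover have "(g_raw \<alpha> q :: 'a \<Rightarrow> real) -` (UNIV - {0}) \<inter> space lborel = {x\<in>space lborel. \<not> g_raw \<alpha> q x = (0::real)}"
      by auto
    ultimately have S: "{x\<in>space lborel. \<not> g_raw \<alpha> q x = 0} \<in> sets (lborel::'a measure)" by simp
    have "{x\<in>space lborel. \<not> g_raw \<alpha> q x = 0} \<in> null_sets (lborel::'a measure)"
      using AE_iff_null[OF S] AE0 by simp
    then have "ball (0::'a) e \<in> null_sets lborel"
      by (rule null_sets_subset[OF _ _ sub]) simp
    then have "ball (0::'a) e \<in> null_sets lebesgue"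
      using null_sets_completion_iff[of "ball (0::'a) e" lborel] by simp
    then have "negligible (ball (0::'a) e)" by (simp add: negligible_iff_null_sets)
    then show False using open_not_negligible[of "ball (0::'a) e"] e(1) by simp
  qed
  then show ?thesis using nn by simp
qed

lemma dens_g:
  assumes al: "0 < \<alpha>" and q: "q < \<alpha> / (real DIM('a) + \<alpha>)"
  shows "dens (g_dens \<alpha> q :: 'a::euclidean_space \<Rightarrow> real) (1 / Zc \<alpha> q TYPE('a))"
proof -
  have Z: "0 < Zc \<alpha> q TYPE('a)" by (rule Zc_pos[OF al q])
  have gd: "g_dens \<alpha> q = (\<lambda>x::'a. g_raw \<alpha> q x / Zc \<alpha> q TYPE('a))"
    by (simp add: g_dens_def[abs_def])
  show ?thesis
  proof
    show "continuous_on UNIV (g_dens \<alpha> q :: 'a \<Rightarrow> real)"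
      unfolding gd using Z by (intro continuous_on_divide g_raw_cont[OF al q] continuous_on_const) auto
    show "0 \<le> g_dens \<alpha> q (x::'a)" for x
      unfolding gd using Z by (intro divide_nonneg_pos g_raw_nonneg)
    show "g_dens \<alpha> q (x::'a) \<le> 1 / Zc \<alpha> q TYPE('a)" for x
      unfolding gd using Z g_raw_le1[OF al q, of x] by (simp add: divide_right_mono)
    show "integrable lborel (g_dens \<alpha> q :: 'a \<Rightarrow> real)"
      unfolding gd using g_raw_int[OF al q] by simp
    show "integral\<^sup>L lborel (g_dens \<alpha> q :: 'a \<Rightarrow> real) = 1"
      unfolding gd using Z by (simp add: Zc_def)
  qed
qed

lemma wulff_scale:
  assumes t: "0 < t"
  shows "wulff (\<lambda>v. t * f v) = (*\<^sub>R) t ` wulff f"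
proof (intro set_eqI iffI)
  fix x :: 'a assume x: "x \<in> wulff (\<lambda>v. t * f v)"
  have "(1/t) *\<^sub>R x \<in> wulff f" unfolding wulff_def
  proof (intro CollectI ballI)
    fix v :: 'a assume v: "v \<in> Sph"
    have "x \<bullet> v \<le> t * f v" using x v unfolding wulff_def by blast
    then show "((1/t) *\<^sub>R x) \<bullet> v \<le> f v" using t by (simp add: field_simps)
  qed
  moreover have "x = t *\<^sub>R ((1/t) *\<^sub>R x)" using t by simp
  ultimately show "x \<in> (*\<^sub>R) t ` wulff f" by (rule rev_image_eqI)
next
  fix x :: 'a assume "x \<in> (*\<^sub>R) t ` wulff f"
  then obtain y where y: "y \<in> wulff f" "x = t *\<^sub>R y" by auto
  show "x \<in> wulff (\<lambda>v. t * f v)" unfolding wulff_def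
  proof (intro CollectI ballI)
    fix v :: 'a assume v: "v \<in> Sph"
    have "y \<bullet> v \<le> f v" using y(1) v unfolding wulff_def by blast
    then show "x \<bullet> v \<le> t * f v" using t y(2) by (simp add: mult_left_mono)
  qed
qed

lemma wulff_const:
  assumes "0 \<le> \<rho>"
  shows "wulff (\<lambda>v::'a::euclidean_space. \<rho>) = cball 0 \<rho>"
  using cball_sub_wulff[of \<rho> "\<lambda>_. \<rho>"] wulff_sub_cball[of "\<lambda>_. \<rho>" \<rho>] assms by auto

locale sphm =
  fixes \<mu> :: "'a::euclidean_space measure"
  assumes sets_mu: "sets \<mu> = sets (restrict_space borel (Sph :: 'a set))"
    and fin: "emeasure \<mu> (space \<mu>) < \<infinity>"
begin

lemma space_mu: "space \<mu> = Sph"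
  using sets_eq_imp_space_eq[OF sets_mu] by (simp add: space_restrict_space)

lemma fm: "finite_measure \<mu>" using fin by (intro finite_measureI) simp

lemma meas_cont:
  fixes f :: "'a \<Rightarrow> real"
  assumes "continuous_on Sph f"
  shows "f \<in> borel_measurable \<mu>"
proof -
  have "f \<in> borel_measurable (restrict_space borel Sph)"
    by (rule borel_measurable_continuous_on_restrict[OF assms])
  moreover have "(borel_measurable \<mu> :: ('a \<Rightarrow> real) set) = borel_measurable (restrict_space borel (Sph :: 'a set))"
    by (rule measurable_cong_sets[OF sets_mu refl])
  ultimately show ?thesis by simp
qed

lemma powr_cont:
  fixes f :: "'a \<Rightarrow> real"
  assumes "continuous_on Sph f" "\<forall>v\<in>Sph. 0 < f v"
  shows "continuous_on Sph (\<lambda>v. f v powr p)"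
  using assms by (intro continuous_on_powr continuous_on_const) auto

lemma int_powr:
  fixes f :: "'a \<Rightarrow> real"
  assumes f: "continuous_on Sph f" and r: "\<forall>v\<in>Sph. r \<le> f v" "0 < r" and p: "p < 0"
  shows "integrable \<mu> (\<lambda>v. f v powr p)"
proof (rule finite_measure.integrable_const_bound[OF fm])
  have pos: "\<forall>v\<in>Sph. 0 < f v" using r by force
  show "(\<lambda>v. f v powr p) \<in> borel_measurable \<mu>" by (rule meas_cont[OF powr_cont[OF f pos]])
  show "AE v in \<mu>. norm (f v powr p) \<le> r powr p"
  proof (rule AE_I2)
    fix v assume "v \<in> space \<mu>"
    then have v: "v \<in> Sph" by (simp add: space_mu)
    have "f v powr p \<le> r powr p" using r v p by (intro powr_mono2') auto
    then show "norm (f v powr p) \<le> r powr p" by simp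
  qed
qed

lemma phi_mono:
  fixes f h :: "'a \<Rightarrow> real"
  assumes p: "p < 0" and f: "continuous_on Sph f" and h: "continuous_on Sph h"
    and r: "0 < r" "\<forall>v\<in>Sph. r \<le> f v" and fh: "\<forall>v\<in>Sph. f v \<le> h v"
  shows "phi p \<mu> h \<le> phi p \<mu> f"
proof -
  have rh: "\<forall>v\<in>Sph. r \<le> h v" using r fh by force
  have "(\<integral>v. h v powr p \<partial>\<mu>) \<le> (\<integral>v. f v powr p \<partial>\<mu>)" (is "?L \<le> ?R")
  proof (rule integral_mono_AE)
    show "integrable \<mu> (\<lambda>v. h v powr p)" by (rule int_powr[OF h rh r(1) p])
    show "integrable \<mu> (\<lambda>v. f v powr p)" by (rule int_powr[OF f r(2) r(1) p])
    show "AE v in \<mu>. h v powr p \<le> f v powr p"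
    proof (rule AE_I2)
      fix v assume "v \<in> space \<mu>"
      then have v: "v \<in> Sph" by (simp add: space_mu)
      show "h v powr p \<le> f v powr p" using r fh v p by (intro powr_mono2') force+
    qed
  qed
  then have "- (1 / p) * ?L \<le> - (1 / p) * ?R" by (rule mult_left_mono) (use p in simp)
  then show ?thesis unfolding phi_def by simp
qed

lemma phi_upper:
  fixes f :: "'a \<Rightarrow> real"
  assumes p: "p < 0" and f: "continuous_on Sph f" and r: "0 < r" "\<forall>v\<in>Sph. r \<le> f v"
  shows "phi p \<mu> f \<le> - (1 / p) * (r powr p * measure \<mu> (space \<mu>))"
proof -
  have "(\<integral>v. f v powr p \<partial>\<mu>) \<le> (\<integral>v. r powr p \<partial>\<mu>)" (is "?L \<le> ?R")
  proof (rule integral_mono_AE)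
    show "integrable \<mu> (\<lambda>v. f v powr p)" by (rule int_powr[OF f r(2) r(1) p])
    show "integrable \<mu> (\<lambda>v. r powr p)" using fm by (simp add: finite_measure.integrable_const)
    show "AE v in \<mu>. f v powr p \<le> r powr p"
    proof (rule AE_I2)
      fix v assume "v \<in> space \<mu>"
      then have v: "v \<in> Sph" by (simp add: space_mu)
      show "f v powr p \<le> r powr p" using r v p by (intro powr_mono2') auto
    qed
  qed
  then have "- (1 / p) * ?L \<le> - (1 / p) * ?R" by (rule mult_left_mono) (use p in simp)
  then show ?thesis unfolding phi_def by (simp add: lebesgue_integral_const mult.commute)
qed

lemma phi_const_pos:
  assumes p: "p < 0" and \<rho>: "0 < \<rho>" and nz: "emeasure \<mu> (space \<mu>) \<noteq> 0"
  shows "0 < phi p \<mu> (\<lambda>_. \<rho>)"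
proof -
  have "0 < measure \<mu> (space \<mu>)"
    using nz fin by (simp add: measure_def enn2real_positive_iff less_top[symmetric] zero_less_iff_neq_zero)
  then have "0 < \<rho> powr p * measure \<mu> (space \<mu>)" using \<rho> by simp
  moreover have "0 < - (1 / p)" using p by simp
  ultimately have "0 < - (1 / p) * (\<rho> powr p * measure \<mu> (space \<mu>))" by (rule mult_pos_pos[rotated])
  then show ?thesis unfolding phi_def by (simp add: lebesgue_integral_const mult.commute)
qed

lemma phi_lim:
  fixes H :: "nat \<Rightarrow> 'a \<Rightarrow> real" and h :: "'a \<Rightarrow> real"
  assumes p: "p < 0" and H: "\<And>i. continuous_on Sph (H i)" and h: "continuous_on Sph h"
    and r: "0 < r" "\<And>i. \<forall>v\<in>Sph. r \<le> H i v" "\<forall>v\<in>Sph. r \<le> h v"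
    and lim: "\<And>v. v \<in> Sph \<Longrightarrow> (\<lambda>i. H i v) \<longlonglongrightarrow> h v"
  shows "(\<lambda>i. phi p \<mu> (H i)) \<longlonglongrightarrow> phi p \<mu> h"
proof -
  have "(\<lambda>i. \<integral>v. H i v powr p \<partial>\<mu>) \<longlonglongrightarrow> (\<integral>v. h v powr p \<partial>\<mu>)"
  proof (rule integral_dominated_convergence[where w="\<lambda>_. r powr p"])
    have hpos: "\<forall>v\<in>Sph. 0 < h v" using r by force
    show "(\<lambda>v. h v powr p) \<in> borel_measurable \<mu>" by (rule meas_cont[OF powr_cont[OF h hpos]])
    show "(\<lambda>v. H i v powr p) \<in> borel_measurable \<mu>" for i
    proof -
      have "\<forall>v\<in>Sph. 0 < H i v" using r(1) r(2)[of i] by force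
      then show ?thesis by (rule meas_cont[OF powr_cont[OF H]])
    qed
    show "integrable \<mu> (\<lambda>_. r powr p)" using fm by (simp add: finite_measure.integrable_const)
    show "AE v in \<mu>. norm (H i v powr p) \<le> r powr p" for i
    proof (rule AE_I2)
      fix v assume "v \<in> space \<mu>"
      then have v: "v \<in> Sph" by (simp add: space_mu)
      have "H i v powr p \<le> r powr p" using r(1) r(2)[of i] v p by (intro powr_mono2') auto
      then show "norm (H i v powr p) \<le> r powr p" by simp
    qed
    show "AE v in \<mu>. (\<lambda>i. H i v powr p) \<longlonglongrightarrow> h v powr p"
    proof (rule AE_I2)
      fix v assume "v \<in> space \<mu>"
      then have v: "v \<in> Sph" by (simp add: space_mu)
      have "0 < h v" using r(1) r(3) v by force
      then show "(\<lambda>i. H i v powr p) \<longlonglongrightarrow> h v powr p"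
        using lim[OF v] by (intro tendsto_powr tendsto_const) auto
    qed
  qed
  then show ?thesis unfolding phi_def by (intro tendsto_mult tendsto_const)
qed

end

theorem lemma3p6:
  fixes \<mu> :: "'a::euclidean_space measure" and p \<alpha> q c :: real
  assumes "p < 0" and "\<alpha> > 0" and "q < \<alpha> / (real DIM('a) + \<alpha>)"
    and "sets \<mu> = sets (restrict_space borel (Sph :: 'a set))"
    and "emeasure \<mu> (space \<mu>) < \<infinity>"
    and "emeasure \<mu> (space \<mu>) \<noteq> 0"
    and "\<forall>A\<in>sets \<mu>. emeasure \<mu> (uminus ` A) = emeasure \<mu> A"
    and "\<forall>H. subspace H \<and> H \<noteq> UNIV \<longrightarrow> emeasure \<mu> (Sph \<inter> H) = 0"
    and "0 < c" and "c < 1"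
  shows "\<exists>K\<in>Ke. Gmeas \<alpha> q K = c \<and>
           phi p \<mu> (supp_fun K) = (SUP f\<in>{f\<in>Ce_plus. Gmeas \<alpha> q (wulff f) = c}. phi p \<mu> f) \<and>
           (\<forall>f\<in>Ce_plus. Gmeas \<alpha> q (wulff f) = c \<longrightarrow> phi p \<mu> f \<le> phi p \<mu> (supp_fun K))"
proof -
  note p = assms(1) and c0 = assms(9) and c1 = assms(10)
  define g where "g = (g_dens \<alpha> q :: 'a \<Rightarrow> real)"
  define Z where "Z = Zc \<alpha> q TYPE('a)"
  interpret D: dens g "1/Z" using dens_g[OF assms(2,3)] by (simp add: g_def Z_def)
  interpret M: sphm \<mu> using assms(4,5) by unfold_locales
  have Gm: "\<And>A. Gmeas \<alpha> q A = GG g A" by (simp add: Gmeas_GG g_def)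
  define Fs :: "('a \<Rightarrow> real) set" where "Fs = {f\<in>Ce_plus. Gmeas \<alpha> q (wulff f) = (c::real)}"
  have wb: "wulff f \<in> sets borel" for f :: "'a \<Rightarrow> real" using wulff_closed by (rule borel_closed)
  have CeD: "continuous_on Sph f" "\<forall>v\<in>Sph. 0 < f v" "\<forall>v\<in>Sph. f (- v) = f v"
    if "f \<in> Ce_plus" for f :: "'a \<Rightarrow> real" using that by (auto simp: Ce_plus_def)

  (* step 1: lower bound *)
  obtain r where r: "0 < r" "\<And>u. u \<in> Sph \<Longrightarrow> GG g {x::'a. \<bar>x \<bullet> u\<bar> \<le> r} < c"
    using D.slab_small[OF c0] by blast
  have feas_lower: "\<forall>v\<in>Sph. r \<le> f v" if f: "f \<in> Fs" for f :: "'a \<Rightarrow> real"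
  proof (rule ccontr)
    assume "\<not> (\<forall>v\<in>Sph. r \<le> f v)"
    then obtain u where u: "u \<in> Sph" "f u < r" by (auto simp: not_le)
    have fe: "f (- u) = f u" using CeD(3)[of f] f u(1) by (auto simp: Fs_def)
    have sub: "wulff f \<subseteq> {x. \<bar>x \<bullet> u\<bar> \<le> r}"
    proof
      fix x assume x: "x \<in> wulff f"
      have "- u \<in> Sph" using u(1) by simp
      then have "x \<bullet> u \<le> f u" "x \<bullet> (- u) \<le> f (- u)" using x u(1) unfolding wulff_def by blast+
      then show "x \<in> {x. \<bar>x \<bullet> u\<bar> \<le> r}" using u(2) fe by auto
    qed
    have sb: "{x::'a. \<bar>x \<bullet> u\<bar> \<le> r} \<in> sets borel"
      by (intro borel_closed closed_Collect_le) (auto intro!: continuous_intros)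
    have "GG g (wulff f) \<le> GG g {x. \<bar>x \<bullet> u\<bar> \<le> r}" by (rule D.GG_mono[OF sub wb sb])
    also have "\<dots> < c" by (rule r(2)[OF u(1)])
    finally show False using f by (simp add: Fs_def Gm)
  qed

  (* step 2: feasible point *)
  obtain T where T: "0 < T" "c < GG g (cball 0 T)" using D.big_ball[OF c1] by blast
  obtain t0 where t0: "0 < t0" "t0 \<le> 1" "GG g ((*\<^sub>R) t0 ` cball (0::'a) T) = c"
    using D.GG_ivt[OF compact_cball c0] T(2) by (meson less_imp_le)
  define \<rho> where "\<rho> = t0 * T"
  have \<rho>: "0 < \<rho>" using t0 T by (simp add: \<rho>_def)
  have "wulff (\<lambda>v::'a. \<rho>) = (*\<^sub>R) t0 ` cball (0::'a) T"
    using wulff_scale[OF t0(1), of "\<lambda>_::'a. T"] wulff_const[where 'a='a, of T] T(1) by (simp add: \<rho>_def)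
  then have f0G: "GG g (wulff (\<lambda>v::'a. \<rho>)) = c" using t0(3) by simp
  have f0: "(\<lambda>v::'a. \<rho>) \<in> Fs" using f0G \<rho> by (simp add: Fs_def Ce_plus_def Gm)
  have Fs_ne: "Fs \<noteq> {}" using f0 by blast

  (* step 3: boundedness of sup *)
  have bdd: "bdd_above (phi p \<mu> ` Fs)"
  proof (rule bdd_aboveI2)
    fix f assume f: "f \<in> Fs"
    show "phi p \<mu> f \<le> - (1 / p) * (r powr p * measure \<mu> (space \<mu>))"
      using M.phi_upper[OF p _ r(1) feas_lower[OF f]] CeD(1)[of f] f by (simp add: Fs_def)
  qed
  define S where "S = (SUP f\<in>Fs. phi p \<mu> f)"
  have S_upper: "phi p \<mu> f \<le> S" if "f \<in> Fs" for f :: "'a \<Rightarrow> real"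
    unfolding S_def using that bdd by (rule cSUP_upper)
  have S_pos: "0 < S"
    using M.phi_const_pos[OF p \<rho> assms(6)] S_upper[OF f0] by simp

  (* step 4: maximizing sequence *)
  have "\<exists>f\<in>Fs. S - S / (real i + 2) < phi p \<mu> f" for i :: nat
  proof -
    have "S - S / (real i + 2) < S" using S_pos by simp
    then show ?thesis using less_cSUP_iff[OF Fs_ne bdd] unfolding S_def by blast
  qed
  then obtain F where F: "\<And>i. F i \<in> Fs" "\<And>i. S - S / (real i + 2) < phi p \<mu> (F i)"
    by metis
  have phiF_half: "S / 2 < phi p \<mu> (F i)" for i
  proof -
    have "S / (real i + 2) \<le> S / 2" using S_pos by (intro divide_left_mono) auto
    then show ?thesis using F(2)[of i] by linarith
  qed
  have phiF_lim: "(\<lambda>i. phi p \<mu> (F i)) \<longlonglongrightarrow> S"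
  proof (rule tendsto_sandwich[where f="\<lambda>i. S - S / (real i + 2)" and h="\<lambda>i. S"])
    show "\<forall>\<^sub>F i in sequentially. S - S / (real i + 2) \<le> phi p \<mu> (F i)"
      using F(2) by (intro always_eventually allI less_imp_le)
    show "\<forall>\<^sub>F i in sequentially. phi p \<mu> (F i) \<le> S" by (intro always_eventually allI S_upper F(1))
    have "filterlim (\<lambda>i. real i + 2) at_top sequentially"
      by (rule filterlim_at_top_mono[OF filterlim_real_sequentially]) simp
    then have "(\<lambda>i. S / (real i + 2)) \<longlonglongrightarrow> 0"
      by (intro tendsto_divide_0[OF tendsto_const] filterlim_at_top_imp_at_infinity)
    then show "(\<lambda>i. S - S / (real i + 2)) \<longlonglongrightarrow> S"
      using tendsto_diff[OF tendsto_const[of S]] by fastforce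
  qed (rule tendsto_const)

  (* step 5: the bodies K i *)
  define K where "K i = wulff (F i)" for i
  have Fc: "continuous_on Sph (F i)" for i using CeD(1) F(1) by (auto simp: Fs_def)
  have Fe: "\<forall>v\<in>Sph. F i (- v) = F i v" for i using CeD(3) F(1) by (auto simp: Fs_def)
  have Fr: "\<forall>v\<in>Sph. r \<le> F i v" for i using feas_lower[OF F(1)] .
  have KG: "GG g (K i) = c" for i using F(1) by (simp add: K_def Fs_def Gm)
  have Kball: "cball 0 r \<subseteq> K i" for i unfolding K_def by (rule cball_sub_wulff[OF Fr])
  have K0: "0 \<in> K i" for i using Kball[of i] r(1) by auto
  have Kne: "K i \<noteq> {}" for i using K0 by blast
  have Ksym: "uminus ` K i = K i" for i unfolding K_def by (rule wulff_sym[OF Fe])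
  have Kbd: "bounded (K i)" for i
  proof -
    have "bounded (F i ` Sph)" by (rule compact_imp_bounded[OF compact_continuous_image[OF Fc compact_sphere]])
    then obtain Mb where Mb: "\<forall>y\<in>F i ` Sph. norm y \<le> Mb" by (auto simp: bounded_iff)
    have "\<forall>v\<in>Sph. F i v \<le> max Mb 0" using Mb by force
    then have "K i \<subseteq> cball 0 (max Mb 0)" unfolding K_def by (rule wulff_sub_cball) simp
    then show ?thesis using bounded_cball bounded_subset by blast
  qed
  define Hd where "Hd i = supp_fun (K i)" for i
  have HleF: "\<forall>v\<in>Sph. Hd i v \<le> F i v" for i
  proof
    fix v :: 'a assume v: "v \<in> Sph"
    show "Hd i v \<le> F i v" unfolding Hd_def
      by (rule supp_least[OF Kne]) (use v in \<open>auto simp: K_def wulff_def\<close>)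
  qed
  have Hr: "\<forall>v\<in>Sph. r \<le> Hd i v" for i
    unfolding Hd_def using supp_ge[OF Kball Kbd _ less_imp_le[OF r(1)]] by blast
  have Hcont: "continuous_on Sph (Hd i)" for i
  proof -
    obtain b where "b > 0" "\<forall>x\<in>K i. norm x \<le> b" using Kbd[of i] bounded_pos by blast
    then have "K i \<subseteq> cball 0 b" by auto
    then show ?thesis unfolding Hd_def by (rule supp_continuous[OF _ Kne])
  qed
  have phiHF: "phi p \<mu> (F i) \<le> phi p \<mu> (Hd i)" for i
    by (rule M.phi_mono[OF p Hcont Fc r(1) Hr HleF])

  (* step 6: uniform bound *)
  have "\<exists>R. \<forall>i. K i \<subseteq> cball 0 R"
  proof (rule ccontr)
    assume nb: "\<not> (\<exists>R. \<forall>i. K i \<subseteq> cball 0 R)"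
    have "\<exists>i x. x \<in> K i \<and> real m < norm x" for m :: nat
      using nb[unfolded not_ex, rule_format, of "real m"] by (auto simp: subset_iff not_le)
    then obtain ii xx where xx: "\<And>m. xx m \<in> K (ii m)" "\<And>m. real m < norm (xx m)" by metis
    have xx0: "xx m \<noteq> 0" for m using xx(2)[of m] by auto
    define u where "u m = xx m /\<^sub>R norm (xx m)" for m
    have u: "u m \<in> Sph" for m using xx0[of m] by (simp add: u_def)
    obtain l \<sigma> where l: "l \<in> Sph" "strict_mono \<sigma>" "(u \<circ> \<sigma>) \<longlonglongrightarrow> l"
      using compact_sphere[of "0::'a" 1] u
      unfolding compact_eq_seq_compact_metric seq_compact_def by metis
    define \<Phi> where "\<Phi> m v = max r \<bar>xx (\<sigma> m) \<bullet> v\<bar>" for m v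
    have \<Phi>c: "continuous_on Sph (\<Phi> m)" for m
      unfolding \<Phi>_def by (intro continuous_intros)
    have \<Phi>r: "\<forall>v\<in>Sph. r \<le> \<Phi> m v" for m by (simp add: \<Phi>_def)
    have \<Phi>H: "\<forall>v\<in>Sph. \<Phi> m v \<le> Hd (ii (\<sigma> m)) v" for m
    proof
      fix v :: 'a assume v: "v \<in> Sph"
      have a: "xx (\<sigma> m) \<bullet> v \<le> Hd (ii (\<sigma> m)) v"
        unfolding Hd_def by (rule supp_upper[OF Kbd xx(1)])
      have "- xx (\<sigma> m) \<in> K (ii (\<sigma> m))" using xx(1)[of "\<sigma> m"] Ksym[of "ii (\<sigma> m)"] by force
      then have b: "(- xx (\<sigma> m)) \<bullet> v \<le> Hd (ii (\<sigma> m)) v"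
        unfolding Hd_def by (rule supp_upper[OF Kbd])
      show "\<Phi> m v \<le> Hd (ii (\<sigma> m)) v" using a b Hr[of "ii (\<sigma> m)"] v by (auto simp: \<Phi>_def)
    qed
    have ub: "S / 2 < phi p \<mu> (\<Phi> m)" for m
    proof -
      have "S / 2 < phi p \<mu> (F (ii (\<sigma> m)))" by (rule phiF_half)
      also have "\<dots> \<le> phi p \<mu> (Hd (ii (\<sigma> m)))" by (rule phiHF)
      also have "\<dots> \<le> phi p \<mu> (\<Phi> m)" by (rule M.phi_mono[OF p \<Phi>c Hcont r(1) \<Phi>r \<Phi>H])
      finally show ?thesis .
    qed
    have Nset: "Sph \<inter> {v::'a. v \<bullet> l = 0} \<in> null_sets \<mu>"
    proof -
      have H: "subspace {v::'a. v \<bullet> l = 0}" by (rule subspace_hyperplane2)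
      have "l \<notin> {v::'a. v \<bullet> l = 0}" using l(1) by (simp add: dot_square_norm)
      then have "{v::'a. v \<bullet> l = 0} \<noteq> UNIV" by blast
      then have e0: "emeasure \<mu> (Sph \<inter> {v::'a. v \<bullet> l = 0}) = 0" using assms(8) H by blast
      have "{v::'a. v \<bullet> l = 0} \<in> sets borel"
        by (intro borel_closed closed_Collect_eq) (auto intro!: continuous_intros)
      then have "Sph \<inter> {v::'a. v \<bullet> l = 0} \<in> sets \<mu>"
        unfolding assms(4) sets_restrict_space by blast
      then show ?thesis using e0 by (simp add: null_sets_def)
    qed
    have intlim: "(\<lambda>m. \<integral>v. \<Phi> m v powr p \<partial>\<mu>) \<longlonglongrightarrow> (\<integral>v. 0 \<partial>\<mu>)"
    proof (rule integral_dominated_convergence[where w="\<lambda>_. r powr p"])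
      show "(\<lambda>v. 0::real) \<in> borel_measurable \<mu>" by simp
      show "(\<lambda>v. \<Phi> m v powr p) \<in> borel_measurable \<mu>" for m
      proof -
        have "\<forall>v\<in>Sph. 0 < \<Phi> m v" using \<Phi>r[of m] r(1) by force
        then show ?thesis by (rule M.meas_cont[OF M.powr_cont[OF \<Phi>c]])
      qed
      show "integrable \<mu> (\<lambda>_. r powr p)" using M.fm by (simp add: finite_measure.integrable_const)
      show "AE v in \<mu>. norm (\<Phi> m v powr p) \<le> r powr p" for m
      proof (rule AE_I2)
        fix v assume "v \<in> space \<mu>"
        then have v: "v \<in> Sph" by (simp add: M.space_mu)
        have "\<Phi> m v powr p \<le> r powr p" using \<Phi>r[of m] r(1) v p by (intro powr_mono2') auto
        then show "norm (\<Phi> m v powr p) \<le> r powr p" by simp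
      qed
      show "AE v in \<mu>. (\<lambda>m. \<Phi> m v powr p) \<longlonglongrightarrow> 0"
      proof (rule AE_I'[OF Nset])
        show "{v \<in> space \<mu>. \<not> (\<lambda>m. \<Phi> m v powr p) \<longlonglongrightarrow> 0} \<subseteq> Sph \<inter> {v. v \<bullet> l = 0}"
        proof (rule subsetI, rule ccontr)
          fix v assume vA: "v \<in> {v \<in> space \<mu>. \<not> (\<lambda>m. \<Phi> m v powr p) \<longlonglongrightarrow> 0}"
            and vN: "v \<notin> Sph \<inter> {v. v \<bullet> l = 0}"
          have v: "v \<in> Sph" using vA by (simp add: M.space_mu)
          then have a: "0 < \<bar>l \<bullet> v\<bar>" using vN by (auto simp: inner_commute)
          have t1: "(\<lambda>m. \<bar>u (\<sigma> m) \<bullet> v\<bar>) \<longlonglongrightarrow> \<bar>l \<bullet> v\<bar>"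
            using l(3) by (auto simp: o_def intro!: tendsto_intros)
          have ev: "eventually (\<lambda>m. \<bar>l \<bullet> v\<bar> / 2 < \<bar>u (\<sigma> m) \<bullet> v\<bar>) sequentially"
            using t1 a by (intro order_tendstoD) auto
          have fl: "filterlim (\<lambda>m. \<bar>l \<bullet> v\<bar> / 2 * real m) at_top sequentially"
            using a by (intro filterlim_tendsto_pos_mult_at_top[OF tendsto_const _ filterlim_real_sequentially]) auto
          have "filterlim (\<lambda>m. \<Phi> m v) at_top sequentially"
          proof (rule filterlim_at_top_mono[OF fl])
            show "eventually (\<lambda>m. \<bar>l \<bullet> v\<bar> / 2 * real m \<le> \<Phi> m v) sequentially"
              using ev
            proof eventually_elim
              case (elim m)
              have nx: "real m \<le> norm (xx (\<sigma> m))"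
                using xx(2)[of "\<sigma> m"] seq_suble[OF l(2), of m] by linarith
              have "xx (\<sigma> m) \<bullet> v = norm (xx (\<sigma> m)) * (u (\<sigma> m) \<bullet> v)"
                using xx0[of "\<sigma> m"] by (simp add: u_def)
              then have eq: "\<bar>xx (\<sigma> m) \<bullet> v\<bar> = norm (xx (\<sigma> m)) * \<bar>u (\<sigma> m) \<bullet> v\<bar>"
                by (simp add: abs_mult)
              have "\<bar>l \<bullet> v\<bar> / 2 * real m \<le> \<bar>u (\<sigma> m) \<bullet> v\<bar> * norm (xx (\<sigma> m))"
                using elim nx a by (intro mult_mono) auto
              also have "\<dots> = \<bar>xx (\<sigma> m) \<bullet> v\<bar>" using eq by simp
              also have "\<dots> \<le> \<Phi> m v" by (simp add: \<Phi>_def)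
              finally show ?case .
            qed
          qed
          then have "(\<lambda>m. \<Phi> m v powr p) \<longlonglongrightarrow> 0" using p by (intro tendsto_neg_powr)
          then show False using vA by simp
        qed
      qed
    qed
    have "(\<lambda>m. phi p \<mu> (\<Phi> m)) \<longlonglongrightarrow> - (1 / p) * 0"
      using intlim unfolding phi_def by (intro tendsto_mult tendsto_const) simp
    then have "eventually (\<lambda>m. phi p \<mu> (\<Phi> m) < S / 2) sequentially"
      using S_pos by (intro order_tendstoD) auto
    then obtain m where "phi p \<mu> (\<Phi> m) < S / 2" by (auto dest: eventually_happens)
    then show False using ub[of m] by simp
  qed
  then obtain R where R: "\<And>i. K i \<subseteq> cball 0 R" by blast
  have R0: "0 \<le> R" using R[of 0] K0[of 0] by auto
  (* step 7: compactness *)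
  have Hlip: "\<bar>Hd i x - Hd i y\<bar> \<le> R * norm (x - y)" for i x y
    unfolding Hd_def by (rule supp_lipschitz[OF R Kne])
  have H0: "Hd i 0 = 0" for i using Kne[of i] by (simp add: Hd_def supp_fun_def)
  have Hbd: "\<bar>Hd i x\<bar> \<le> R * norm x" for i x using Hlip[of i x 0] H0[of i] by simp
  obtain \<sigma> where \<sigma>: "strict_mono \<sigma>" "\<And>x. convergent (\<lambda>i. Hd (\<sigma> i) x)"
    using lip_subseq[of Hd R "\<lambda>x. R * norm x", OF Hlip Hbd] by blast
  define h where "h x = lim (\<lambda>i. Hd (\<sigma> i) x)" for x
  have hlim: "(\<lambda>i. Hd (\<sigma> i) x) \<longlonglongrightarrow> h x" for x
    unfolding h_def using \<sigma>(2) by (simp add: convergent_LIMSEQ_iff)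
  (* step 8 *)
  have hlip: "\<bar>h x - h y\<bar> \<le> R * norm (x - y)" for x y
  proof (rule LIMSEQ_le_const2)
    show "(\<lambda>i. \<bar>Hd (\<sigma> i) x - Hd (\<sigma> i) y\<bar>) \<longlonglongrightarrow> \<bar>h x - h y\<bar>"
      by (intro tendsto_intros hlim)
    show "\<exists>N. \<forall>i\<ge>N. \<bar>Hd (\<sigma> i) x - Hd (\<sigma> i) y\<bar> \<le> R * norm (x - y)" using Hlip by blast
  qed
  have hcont: "continuous_on Sph h"
  proof -
    have "R-lipschitz_on Sph h"
      using hlip R0 by (intro lipschitz_onI) (auto simp: dist_norm dist_real_def)
    then show ?thesis by (rule lipschitz_on_continuous_on)
  qed
  have hr: "\<forall>v\<in>Sph. r \<le> h v"
  proof
    fix v :: 'a assume v: "v \<in> Sph"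
    show "r \<le> h v" using hlim[of v] Hr v by (intro LIMSEQ_le_const) auto
  qed
  have HR: "\<forall>v\<in>Sph. Hd i v \<le> R" for i
  proof
    fix v :: 'a assume v: "v \<in> Sph"
    show "Hd i v \<le> R" unfolding Hd_def
    proof (rule supp_least[OF Kne])
      fix x assume x: "x \<in> K i"
      have "x \<bullet> v \<le> norm x * norm v" by (rule norm_cauchy_schwarz)
      also have "\<dots> \<le> R" using v R[of i] x by auto
      finally show "x \<bullet> v \<le> R" .
    qed
  qed
  have hR: "\<forall>v\<in>Sph. h v \<le> R"
  proof
    fix v :: 'a assume v: "v \<in> Sph"
    show "h v \<le> R" using hlim[of v] HR v by (intro LIMSEQ_le_const2) auto
  qed
  have heven: "\<forall>v\<in>Sph. h (- v) = h v"
  proof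
    fix v :: 'a assume v: "v \<in> Sph"
    have "(\<lambda>i. Hd (\<sigma> i) (- v)) = (\<lambda>i. Hd (\<sigma> i) v)"
      unfolding Hd_def using supp_even[OF Ksym] by simp
    then show "h (- v) = h v" using hlim[of v] hlim[of "- v"] LIMSEQ_unique by metis
  qed
  define K0 where "K0 = wulff h"
  have K0Ke: "K0 \<in> Ke" unfolding K0_def by (rule wulff_Ke[OF hr hR r(1) heven])
  have K0c: "compact K0" using K0Ke by (simp add: Ke_def)
  (* step 9 *)
  have GK0: "c \<le> GG g K0"
  proof (rule D.GG_usc[where K="\<lambda>i. K (\<sigma> i)"])
    show "K (\<sigma> i) \<in> sets borel" for i unfolding K_def by (rule wb)
    show "K0 \<in> sets borel" unfolding K0_def by (rule wb)
    show "c \<le> GG g (K (\<sigma> i))" for i using KG by simp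
    fix x assume "x \<notin> K0"
    then obtain v where v: "v \<in> Sph" "h v < x \<bullet> v" by (auto simp: K0_def wulff_def not_le)
    have "eventually (\<lambda>i. Hd (\<sigma> i) v < x \<bullet> v) sequentially"
      using hlim[of v] v(2) by (intro order_tendstoD)
    then show "eventually (\<lambda>i. x \<notin> K (\<sigma> i)) sequentially"
    proof eventually_elim
      case (elim i)
      show "x \<notin> K (\<sigma> i)"
      proof
        assume "x \<in> K (\<sigma> i)"
        then have "x \<bullet> v \<le> Hd (\<sigma> i) v" unfolding Hd_def by (rule supp_upper[OF Kbd])
        then show False using elim by simp
      qed
    qed
  qed
  (* step 10 *)
  obtain t where t: "0 < t" "t \<le> 1" "GG g ((*\<^sub>R) t ` K0) = c"
    using D.GG_ivt[OF K0c c0 GK0] by blast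
  define K' where "K' = wulff (\<lambda>v. t * h v)"
  have K'eq: "K' = (*\<^sub>R) t ` K0" unfolding K'_def K0_def by (rule wulff_scale[OF t(1)])
  have K'G: "GG g K' = c" using t(3) K'eq by simp
  have tr: "\<forall>v\<in>Sph. t * r \<le> t * h v" using hr t(1) by (simp add: mult_left_mono)
  have tR: "\<forall>v\<in>Sph. t * h v \<le> t * R" using hR t(1) by (simp add: mult_left_mono)
  have K'Ke: "K' \<in> Ke" unfolding K'_def
    by (rule wulff_Ke[OF tr tR]) (use t(1) r(1) heven in auto)
  have K'c: "compact K'" "convex K'" "uminus ` K' = K'" using K'Ke by (auto simp: Ke_def)
  have K'ball: "cball 0 (t * r) \<subseteq> K'" unfolding K'_def by (rule cball_sub_wulff[OF tr])
  have "(0::'a) \<in> cball 0 (t * r)" using t(1) r(1) by simp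
  then have K'ne: "K' \<noteq> {}" using K'ball by blast
  have K'sub: "K' \<subseteq> cball 0 (t * R)" unfolding K'_def by (rule wulff_sub_cball[OF tR]) (use t R0 in simp)
  (* step 11 *)
  define hK where "hK = supp_fun K'"
  have hKle: "\<forall>v\<in>Sph. hK v \<le> h v"
  proof
    fix v :: 'a assume v: "v \<in> Sph"
    show "hK v \<le> h v" unfolding hK_def
    proof (rule supp_least[OF K'ne])
      fix x assume "x \<in> K'"
      then have "x \<bullet> v \<le> t * h v" using v unfolding K'_def wulff_def by blast
      also have "\<dots> \<le> h v"
      proof (rule mult_left_le_one_le)
        have "r \<le> h v" using hr v by blast
        then show "0 \<le> h v" using r(1) by linarith
      qed (use t in auto)
      finally show "x \<bullet> v \<le> h v" .
    qed
  qed
  have tr0: "0 < t * r" using t(1) r(1) by simp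
  have hKr: "\<forall>v\<in>Sph. t * r \<le> hK v"
    unfolding hK_def using supp_ge[OF K'ball compact_imp_bounded[OF K'c(1)] _ less_imp_le[OF tr0]] by blast
  have hKc: "continuous_on Sph hK" unfolding hK_def by (rule supp_continuous[OF K'sub K'ne])
  have hKe: "\<forall>v\<in>Sph. hK (- v) = hK v" unfolding hK_def using supp_even[OF K'c(3)] by simp
  have hKCe: "hK \<in> Ce_plus" unfolding Ce_plus_def using hKc hKe hKr tr0 by force
  have wK: "wulff hK = K'" unfolding hK_def by (rule wulff_supp[OF K'c(1,2) K'ne])
  have hKFs: "hK \<in> Fs" using hKCe wK K'G by (simp add: Fs_def Gm)
  have le1: "phi p \<mu> hK \<le> S" by (rule S_upper[OF hKFs])
  (* step 12 *)
  have hphi: "phi p \<mu> h \<le> phi p \<mu> hK" by (rule M.phi_mono[OF p hKc hcont tr0 hKr hKle])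
  have limH: "(\<lambda>i. phi p \<mu> (Hd (\<sigma> i))) \<longlonglongrightarrow> phi p \<mu> h"
    by (rule M.phi_lim[OF p Hcont hcont r(1) Hr hr hlim])
  have limF: "(\<lambda>i. phi p \<mu> (F (\<sigma> i))) \<longlonglongrightarrow> S"
    using LIMSEQ_subseq_LIMSEQ[OF phiF_lim \<sigma>(1)] by (simp add: o_def)
  have "S \<le> phi p \<mu> h"
    by (rule LIMSEQ_le[OF limF limH]) (use phiHF in blast)
  then have eqS: "phi p \<mu> hK = S" using hphi le1 by simp
  (* step 13 *)
  show ?thesis
  proof (intro bexI[of _ K'] conjI ballI impI)
    show "K' \<in> Ke" by (rule K'Ke)
    show "Gmeas \<alpha> q K' = c" using K'G by (simp add: Gm)
    show "phi p \<mu> (supp_fun K') = (SUP f\<in>{f\<in>Ce_plus. Gmeas \<alpha> q (wulff f) = c}. phi p \<mu> f)"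
      using eqS by (simp add: hK_def S_def Fs_def)
    fix f :: "'a \<Rightarrow> real" assume "f \<in> Ce_plus" "Gmeas \<alpha> q (wulff f) = c"
    then have "f \<in> Fs" by (simp add: Fs_def)
    then show "phi p \<mu> f \<le> phi p \<mu> (supp_fun K')" using S_upper eqS by (simp add: hK_def)
  qed
qed


end
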